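(* Let $\mathcal{H}$ be a hypothesis set of functions $h\colon \mathcal{X}\times(\mathcal{Y}\cup\{n+1\})\to\mathbb{R}$ that is symmetric and complete, let $c\in(0,1)$ and $\mu\ge 0$. Then for any hypothesis $h\in\mathcal{H}$ and any distribution $\mathcal{D}$ over $\mathcal{X}\times\mathcal{Y}$, \[ \mathcal{E}_{\mathsf{L}_{\mathrm{abs}}}(h)-\mathcal{E}^*_{\mathsf{L}_{\mathrm{abs}}}(\mathcal{H})+\mathcal{M}_{\mathsf{L}_{\mathrm{abs}}}(\mathcal{H})\le \Gamma_\mu\Big(\mathcal{E}_{\mathsf{L}_\mu}(h)-\mathcal{E}^*_{\mathsf{L}_\mu}(\mathcal{H})+\mathcal{M}_{\mathsf{L}_\mu}(\mathcal{H})\Big), \] where \[ \Gamma_\mu(t)=\begin{cases}\sqrt{(2-c)\,2^{\mu}(2-\mu)\,t} & \mu\in[0,1),\\ \sqrt{2(2-c)(n+1)^{\mu-1}\,t} & \mu\in[1,2),\\ (\mu-1)(n+1)^{\mu-1}\,t & \mu\in[2,+\infty).\end{cases} \]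
   Context: Let $\mathcal{X}$ be an input space and $\mathcal{Y}=\{1,\dots,n\}$ with $n\ge 2$. A distribution $\mathcal{D}$ on $\mathcal{X}\times\mathcal{Y}$ has conditional probabilities $p(x,y)=\mathcal{D}(Y=y\mid X=x)$. A hypothesis set $\mathcal{H}$ consists of functions $h\colon\mathcal{X}\times(\mathcal{Y}\cup\{n+1\})\to\mathbb{R}$, where $n+1$ is an extra "abstention" label. For $h\in\mathcal{H}$ and $x\in\mathcal{X}$, the predicted label $\mathsf{h}(x)$ is $n+1$ if $h(x,n+1)\ge\max_{y\in\mathcal{Y}}h(x,y)$; otherwise $\mathsf{h}(x)=\operatorname{argmax}_{y\in\mathcal{Y}}h(x,y)$, with ties broken by an arbitrary but fixed deterministic rule. For a constant cost $c\in(0,1)$, the score-based abstention loss is $\mathsf{L}_{\mathrm{abs}}(h,x,y)=\mathbb{1}_{\mathsf{h}(x)\neq y}\mathbb{1}_{\mathsf{h}(x)\neq n+1}+c\,\mathbb{1}_{\mathsf{h}(x)=n+1}$. For $\mu\ge0$, define $\ell_\mu(h,x,y)=\frac{1}{1-\mu}\Big(\big[\sum_{y'\in\mathcal{Y}\cup\{n+1\}}e^{h(x,y')-h(x,y)}\big]^{1-\mu}-1\Big)$ if $\mu\neq1$ and $\ell_1(h,x,y)=\log\big(\sum_{y'\in\mathcal{Y}\cup\{n+1\}}e^{h(x,y')-h(x,y)}\big)$, for $y\in\mathcal{Y}\cup\{n+1\}$; and the cross-entropy score-based surrogate $\mathsf{L}_\mu(h,x,y)=\ell_\mu(h,x,y)+(1-c)\,\ell_\mu(h,x,n+1)$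 for $(x,y)\in\mathcal{X}\times\mathcal{Y}$. For a loss $\mathsf{L}$: $\mathcal{E}_{\mathsf{L}}(h)=\mathbb{E}_{(x,y)\sim\mathcal{D}}[\mathsf{L}(h,x,y)]$, $\mathcal{E}^*_{\mathsf{L}}(\mathcal{H})=\inf_{h\in\mathcal{H}}\mathcal{E}_{\mathsf{L}}(h)$, and the minimizability gap $\mathcal{M}_{\mathsf{L}}(\mathcal{H})=\mathcal{E}^*_{\mathsf{L}}(\mathcal{H})-\mathbb{E}_x\big[\inf_{h\in\mathcal{H}}\mathbb{E}_y[\mathsf{L}(h,X,y)\mid X=x]\big]$. $\mathcal{H}$ is symmetric if there is a family $\mathcal{F}$ of functions $\mathcal{X}\to\mathbb{R}$ such that for every $x$, $\{[h(x,1),\dots,h(x,n+1)]:h\in\mathcal{H}\}=\{[f_1(x),\dots,f_{n+1}(x)]:f_1,\dots,f_{n+1}\in\mathcal{F}\}$. $\mathcal{H}$ is complete if $\{h(x,y):h\in\mathcal{H}\}=\mathbb{R}$ for every $(x,y)\in\mathcal{X}\times(\mathcal{Y}\cup\{n+1\})$. *)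

theory Defs
  imports "HOL-Probability.Probability"
begin

text \<open>Labels: Y = {1..n}, abstention label n+1. A hypothesis is a score function
  h :: 'x \<Rightarrow> nat \<Rightarrow> real (only its values at labels 1..n+1 matter).
  The tie-breaking rule is a fixed deterministic choice function tb.\<close>

definition pred_label :: "nat \<Rightarrow> ('x \<Rightarrow> nat set \<Rightarrow> nat) \<Rightarrow> ('x \<Rightarrow> nat \<Rightarrow> real) \<Rightarrow> 'x \<Rightarrow> nat" where
  "pred_label n tb h x =
     (if h x (n + 1) \<ge> Max ((\<lambda>y. h x y) ` {1..n}) then n + 1
      else tb x {y \<in> {1..n}. h x y = Max ((\<lambda>y. h x y) ` {1..n})})"

definition L_abs :: "nat \<Rightarrow> ('x \<Rightarrow> nat set \<Rightarrow> nat) \<Rightarrow> real \<Rightarrow> ('x \<Rightarrow> nat \<Rightarrow> real) \<Rightarrow> 'x \<Rightarrow> nat \<Rightarrow> real" where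
  "L_abs n tb c h x y =
     (if pred_label n tb h x \<noteq> y \<and> pred_label n tb h x \<noteq> n + 1 then 1 else 0)
     + c * (if pred_label n tb h x = n + 1 then 1 else 0)"

definition ell :: "nat \<Rightarrow> real \<Rightarrow> ('x \<Rightarrow> nat \<Rightarrow> real) \<Rightarrow> 'x \<Rightarrow> nat \<Rightarrow> real" where
  "ell n \<mu> h x y =
     (let s = (\<Sum>y'\<in>{1..n+1}. exp (h x y' - h x y))
      in if \<mu> = 1 then ln s else (s powr (1 - \<mu>) - 1) / (1 - \<mu>))"

definition L_mu :: "nat \<Rightarrow> real \<Rightarrow> real \<Rightarrow> ('x \<Rightarrow> nat \<Rightarrow> real) \<Rightarrow> 'x \<Rightarrow> nat \<Rightarrow> real" where
  "L_mu n c \<mu> h x y = ell n \<mu> h x y + (1 - c) * ell n \<mu> h x (n + 1)"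

text \<open>The distribution D on X \<times> Y is given by its marginal Mx on X and its
  conditional probabilities p x y = D(Y = y | X = x).\<close>

definition cond_loss ::
  "nat \<Rightarrow> ('x \<Rightarrow> nat \<Rightarrow> real) \<Rightarrow> (('x \<Rightarrow> nat \<Rightarrow> real) \<Rightarrow> 'x \<Rightarrow> nat \<Rightarrow> real)
    \<Rightarrow> ('x \<Rightarrow> nat \<Rightarrow> real) \<Rightarrow> 'x \<Rightarrow> real" where
  "cond_loss n p L h x = (\<Sum>y\<in>{1..n}. p x y * L h x y)"

definition exp_loss ::
  "nat \<Rightarrow> 'x measure \<Rightarrow> ('x \<Rightarrow> nat \<Rightarrow> real) \<Rightarrow> (('x \<Rightarrow> nat \<Rightarrow> real) \<Rightarrow> 'x \<Rightarrow> nat \<Rightarrow> real)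
    \<Rightarrow> ('x \<Rightarrow> nat \<Rightarrow> real) \<Rightarrow> ereal" where
  "exp_loss n Mx p L h = enn2ereal (\<integral>\<^sup>+ x. ennreal (cond_loss n p L h x) \<partial>Mx)"

definition best_loss ::
  "nat \<Rightarrow> 'x measure \<Rightarrow> ('x \<Rightarrow> nat \<Rightarrow> real) \<Rightarrow> (('x \<Rightarrow> nat \<Rightarrow> real) \<Rightarrow> 'x \<Rightarrow> nat \<Rightarrow> real)
    \<Rightarrow> ('x \<Rightarrow> nat \<Rightarrow> real) set \<Rightarrow> ereal" where
  "best_loss n Mx p L H = (INF h\<in>H. exp_loss n Mx p L h)"

definition min_gap ::
  "nat \<Rightarrow> 'x measure \<Rightarrow> ('x \<Rightarrow> nat \<Rightarrow> real) \<Rightarrow> (('x \<Rightarrow> nat \<Rightarrow> real) \<Rightarrow> 'x \<Rightarrow> nat \<Rightarrow> real)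
    \<Rightarrow> ('x \<Rightarrow> nat \<Rightarrow> real) set \<Rightarrow> ereal" where
  "min_gap n Mx p L H = best_loss n Mx p L H
     - enn2ereal (\<integral>\<^sup>+ x. ennreal (INF h\<in>H. cond_loss n p L h x) \<partial>Mx)"

definition symmetric_hyp :: "nat \<Rightarrow> ('x \<Rightarrow> nat \<Rightarrow> real) set \<Rightarrow> bool" where
  "symmetric_hyp n H \<longleftrightarrow> (\<exists>F :: ('x \<Rightarrow> real) set. \<forall>x.
     {(\<lambda>y\<in>{1..n+1}. h x y) | h. h \<in> H}
     = {(\<lambda>y\<in>{1..n+1}. f y x) | f. \<forall>y\<in>{1..n+1}. f y \<in> F})"

definition complete_hyp :: "nat \<Rightarrow> ('x \<Rightarrow> nat \<Rightarrow> real) set \<Rightarrow> bool" where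
  "complete_hyp n H \<longleftrightarrow> (\<forall>x. \<forall>y\<in>{1..n+1}. {h x y | h. h \<in> H} = UNIV)"

definition Gamma_mu :: "nat \<Rightarrow> real \<Rightarrow> real \<Rightarrow> real \<Rightarrow> real" where
  "Gamma_mu n c \<mu> t =
     (if \<mu> < 1 then sqrt ((2 - c) * 2 powr \<mu> * (2 - \<mu>) * t)
      else if \<mu> < 2 then sqrt (2 * (2 - c) * (real n + 1) powr (\<mu> - 1) * t)
      else (\<mu> - 1) * (real n + 1) powr (\<mu> - 1) * t)"

end

theory Submission
  imports Defs
begin

definition Lam :: "real \<Rightarrow> real \<Rightarrow> real" where
  "Lam mu x = (if mu = 1 then ln x else (x powr (mu - 1) - 1) / (mu - 1))"

lemma Lam_deriv:
  assumes "x > 0"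
  shows "(Lam mu has_real_derivative x powr (mu - 2)) (at x)"
proof (cases "mu = 1")
  case True
  have "(ln has_real_derivative inverse x) (at x)" using assms by (rule DERIV_ln)
  moreover have "inverse x = x powr (mu - 2)" using True assms
    by (simp add: powr_minus)
  ultimately show ?thesis using True unfolding Lam_def by simp
next
  case False
  have "((\<lambda>z. z powr (mu - 1)) has_real_derivative (mu - 1) * x powr (mu - 1 - 1)) (at x)"
    by (rule has_real_derivative_powr) (use assms in auto)
  then have "((\<lambda>z. (z powr (mu - 1) - 1) / (mu - 1)) has_real_derivative
          ((mu - 1) * x powr (mu - 1 - 1) - 0) / (mu - 1)) (at x)"
    by (intro DERIV_cdivide DERIV_diff DERIV_const)
  moreover have "((mu - 1) * x powr (mu - 1 - 1) - 0) / (mu - 1) = x powr (mu - 2)"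
    using False by simp
  ultimately show ?thesis using False unfolding Lam_def by (simp add: fun_eq_iff)
qed

lemma Lam_scale:
  assumes "v > 0" "z > 0"
  shows "Lam mu (v * z) - Lam mu v = v powr (mu - 1) * Lam mu z"
proof (cases "mu = 1")
  case True then show ?thesis using assms by (simp add: Lam_def ln_mult)
next
  case False
  have e: "(v * z) powr (mu - 1) = v powr (mu - 1) * z powr (mu - 1)"
    using assms by (simp add: powr_mult)
  show ?thesis using False unfolding Lam_def e
    by (simp add: diff_divide_distrib[symmetric] right_diff_distrib)
qed

lemma Lam_ge_ln:
  assumes "mu \<ge> 1" "z > 0"
  shows "ln z \<le> Lam mu z"
proof (cases "mu = 1")
  case True then show ?thesis by (simp add: Lam_def)
next
  case False
  then have k: "mu - 1 > 0" using assms by simp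
  have "1 + (mu - 1) * ln z \<le> exp ((mu - 1) * ln z)" by (rule exp_ge_add_one_self)
  also have "exp ((mu - 1) * ln z) = z powr (mu - 1)" using assms by (simp add: powr_def)
  finally have "(mu - 1) * ln z \<le> z powr (mu - 1) - 1" by simp
  then show ?thesis using False k by (simp add: Lam_def pos_le_divide_eq mult.commute)
qed

lemma Lam_mono:
  assumes "0 < x" "x \<le> y"
  shows "Lam mu x \<le> Lam mu y"
proof -
  have "\<exists>d. (Lam mu has_real_derivative d) (at z) \<and> 0 \<le> d" if "x \<le> z" "z \<le> y" for z
    using Lam_deriv[of z mu] that assms by auto
  then show ?thesis using DERIV_nonneg_imp_nondecreasing[OF assms(2)] by blast
qed

lemma Lam_incr:
  assumes "mu \<le> 2" "0 < u" "u \<le> v" "0 \<le> t"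
  shows "Lam mu (v + t) - Lam mu v \<le> Lam mu (u + t) - Lam mu u"
proof -
  let ?G = "\<lambda>x. Lam mu (x + t) - Lam mu x"
  have "\<exists>d. (?G has_real_derivative d) (at z) \<and> d \<le> 0" if "u \<le> z" "z \<le> v" for z
  proof -
    have z: "z > 0" using that assms by simp
    have "((\<lambda>x. x + t) has_real_derivative 1) (at z)"
      by (auto intro!: derivative_eq_intros)
    then have "((\<lambda>x. Lam mu (x + t)) has_real_derivative (z + t) powr (mu - 2) * 1) (at z)"
      by (intro DERIV_chain2[OF Lam_deriv]) (use z assms in auto)
    then have "(?G has_real_derivative (z + t) powr (mu - 2) * 1 - z powr (mu - 2)) (at z)"
      by (intro DERIV_diff Lam_deriv z)
    moreover have "(z + t) powr (mu - 2) \<le> z powr (mu - 2)"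
      by (rule powr_mono2') (use z assms in auto)
    ultimately show ?thesis by auto
  qed
  then show ?thesis using DERIV_nonpos_imp_nonincreasing[OF assms(3), of ?G] by blast
qed

lemma superadd_powr:
  fixes k u t :: real
  assumes "k \<ge> 1" "u > 0" "t > 0"
  shows "u powr k + t powr k \<le> (u + t) powr k"
proof -
  have "u powr (k - 1) \<le> (u + t) powr (k - 1)" by (rule powr_mono2) (use assms in auto)
  then have 1: "u powr (k - 1) * u \<le> (u + t) powr (k - 1) * u" using assms by simp
  have "t powr (k - 1) \<le> (u + t) powr (k - 1)" by (rule powr_mono2) (use assms in auto)
  then have 2: "t powr (k - 1) * t \<le> (u + t) powr (k - 1) * t" using assms by simp
  have e: "x powr (k - 1) * x = x powr k" if "x > 0" for x :: real
    using that by (simp add: powr_diff)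
  have "u powr k + t powr k \<le> (u + t) powr (k - 1) * (u + t)"
    using 1 2 e[of u] e[of t] assms by (simp add: distrib_left)
  also have "\<dots> = (u + t) powr k" using e[of "u+t"] assms by simp
  finally show ?thesis .
qed

lemma dL_plus:
  assumes "1 + t > 0"
  shows "((\<lambda>t. Lam mu (1 + t)) has_real_derivative (1 + t) powr (mu - 2)) (at t)"
proof -
  have a: "(Lam mu has_real_derivative (1 + t) powr (mu - 2)) (at (1 + t))"
    using Lam_deriv assms by blast
  have b: "((\<lambda>t. 1 + t) has_real_derivative 1) (at t)" by (auto intro!: derivative_eq_intros)
  show ?thesis using DERIV_chain2[OF a b] by simp
qed

lemma dL_minus:
  assumes "1 - t > 0"
  shows "((\<lambda>t. Lam mu (1 - t)) has_real_derivative - ((1 - t) powr (mu - 2))) (at t)"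
proof -
  have a: "(Lam mu has_real_derivative (1 - t) powr (mu - 2)) (at (1 - t))"
    using Lam_deriv assms by blast
  have b: "((\<lambda>t. 1 - t) has_real_derivative -1) (at t)" by (auto intro!: derivative_eq_intros)
  show ?thesis using DERIV_chain2[OF a b] by simp
qed

lemma dP_plus:
  fixes t a :: real
  assumes "1 + t > 0"
  shows "((\<lambda>t. (1 + t) powr a) has_real_derivative a * (1 + t) powr (a - 1)) (at t)"
proof -
  have a: "((\<lambda>z. z powr a) has_real_derivative a * (1 + t) powr (a - 1)) (at (1 + t))"
    using has_real_derivative_powr assms by blast
  have b: "((\<lambda>t. 1 + t) has_real_derivative 1) (at t)" by (auto intro!: derivative_eq_intros)
  show ?thesis using DERIV_chain2[OF a b] by simp
qed

lemma dP_minus: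
  fixes t a :: real
  assumes "1 - t > 0"
  shows "((\<lambda>t. (1 - t) powr a) has_real_derivative - (a * (1 - t) powr (a - 1))) (at t)"
proof -
  have a: "((\<lambda>z. z powr a) has_real_derivative a * (1 - t) powr (a - 1)) (at (1 - t))"
    using has_real_derivative_powr assms by blast
  have b: "((\<lambda>t. 1 - t) has_real_derivative -1) (at t)" by (auto intro!: derivative_eq_intros)
  show ?thesis using DERIV_chain2[OF a b] by simp
qed

lemma pinsker_ln:
  fixes d :: real
  assumes "0 \<le> d" "d < 1"
  shows "d\<^sup>2 \<le> (1 + d) * ln (1 + d) + (1 - d) * ln (1 - d)"
proof -
  define g where "g x = ln (1 + x) - ln (1 - x) - 2 * x" for x :: real
  define f where "f x = (1 + x) * ln (1 + x) + (1 - x) * ln (1 - x) - x\<^sup>2" for x :: real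
  have gpos: "0 \<le> g x" if "0 \<le> x" "x \<le> d" for x
  proof -
    have "\<exists>y. (g has_real_derivative y) (at z) \<and> 0 \<le> y" if "0 \<le> z" "z \<le> x" for z
    proof -
      have z: "z < 1" "0 \<le> z" using that \<open>x \<le> d\<close> assms by auto
      have "(g has_real_derivative (inverse (1 + z) * 1 - inverse (1 - z) * (0 - 1) - 2 * 1)) (at z)"
        unfolding g_def using z
        by (intro DERIV_diff DERIV_chain2[OF DERIV_ln] DERIV_add DERIV_const DERIV_ident DERIV_cmult) (auto intro!: derivative_eq_intros)
      moreover have "0 \<le> inverse (1 + z) * 1 - inverse (1 - z) * (0 - 1) - 2 * 1"
      proof -
        have "inverse (1 + z) + inverse (1 - z) = 2 / (1 - z\<^sup>2)" using z
          by (simp add: field_simps power2_eq_square)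
        moreover have "2 / (1 - z\<^sup>2) \<ge> 2"
        proof -
          have "z * z \<le> z" using z by (simp add: mult_left_le_one_le)
          then have "0 < 1 - z\<^sup>2" using z by (simp add: power2_eq_square)
          moreover have "2 * (1 - z\<^sup>2) \<le> 2" by simp
          ultimately show ?thesis by (simp add: le_divide_eq)
        qed
        ultimately show ?thesis by simp
      qed
      ultimately show ?thesis by blast
    qed
    then have "g 0 \<le> g x" using DERIV_nonneg_imp_nondecreasing[of 0 x g] that by blast
    then show ?thesis by (simp add: g_def)
  qed
  have "\<exists>y. (f has_real_derivative y) (at z) \<and> 0 \<le> y" if "0 \<le> z" "z \<le> d" for z
  proof -
    have z: "z < 1" "0 \<le> z" using that assms by auto
    have "(f has_real_derivative
       ((0 + 1) * ln (1 + z) + (1 + z) * (inverse (1 + z) * (0 + 1))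
        + ((0 - 1) * ln (1 - z) + (1 - z) * (inverse (1 - z) * (0 - 1))) - 2 * z ^ 1 * 1)) (at z)"
      unfolding f_def using z
      by (intro DERIV_diff DERIV_add DERIV_mult DERIV_chain2[OF DERIV_ln] DERIV_const DERIV_ident DERIV_power) (auto intro!: derivative_eq_intros)
    moreover have "((0 + 1) * ln (1 + z) + (1 + z) * (inverse (1 + z) * (0 + 1))
        + ((0 - 1) * ln (1 - z) + (1 - z) * (inverse (1 - z) * (0 - 1))) - 2 * z ^ 1 * 1) = g z"
      using z by (simp add: g_def field_simps)
    ultimately show ?thesis using gpos that by auto
  qed
  then have "f 0 \<le> f d" using DERIV_nonneg_imp_nondecreasing[of 0 d f] assms by blast
  then show ?thesis by (simp add: f_def)
qed

lemma two_le_powr_sum: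
  fixes t a :: real
  assumes "0 \<le> t" "t < 1" "a \<ge> 0"
  shows "2 \<le> (1 + t) powr (- a) + (1 - t) powr (- a)"
proof -
  define X where "X = (1 + t) powr (- a)"
  define Y where "Y = (1 - t) powr (- a)"
  have XY0: "X * Y = ((1 + t) * (1 - t)) powr (- a)" using assms
    by (simp add: X_def Y_def powr_mult)
  have "(1 + t) * (1 - t) = 1 - t\<^sup>2" by (simp add: power2_eq_square algebra_simps)
  then have XY: "X * Y = (1 - t\<^sup>2) powr (- a)" using XY0 by simp
  have "t * t \<le> t" using assms by (simp add: mult_left_le_one_le)
  then have "1 powr (- a) \<le> (1 - t\<^sup>2) powr (- a)"
    by (intro powr_mono2') (use assms in \<open>auto simp: power2_eq_square\<close>)
  then have "1 \<le> X * Y" using XY by simp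
  moreover have "X > 0" "Y > 0" using assms by (auto simp: X_def Y_def)
  moreover have "(X + Y)\<^sup>2 = (X - Y)\<^sup>2 + 4 * (X * Y)"
    by (simp add: power2_eq_square algebra_simps)
  moreover have "0 \<le> (X - Y)\<^sup>2" by simp
  ultimately have "4 \<le> (X + Y)\<^sup>2" by linarith
  then have "2\<^sup>2 \<le> (X + Y)\<^sup>2" by simp
  then have "2 \<le> X + Y"
    by (rule power2_le_imp_le) (use \<open>X > 0\<close> \<open>Y > 0\<close> in linarith)
  then show ?thesis unfolding X_def Y_def .
qed

lemma powr_pred_mult: "x > 0 \<Longrightarrow> x powr (b - 1) * x = x powr b" for x b :: real
  by (simp add: powr_diff)

lemma Lam_one[simp]: "Lam mu 1 = 0"
  by (simp add: Lam_def)

lemma pinsker_powr: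
  fixes mu t :: real
  assumes mu: "0 \<le> mu" "mu < 1" and t: "0 \<le> t" "(2 - mu) * t \<le> 1"
  shows "(2 - mu) * t\<^sup>2 \<le> (1 + (2 - mu) * t) * Lam mu (1 + t) + (1 - (2 - mu) * t) * Lam mu (1 - t)"
proof -
  define r where "r = 2 - mu"
  have r: "1 < r" "r \<le> 2" using mu by (auto simp: r_def)
  have t1: "t < 1"
  proof -
    have "1 * t < r * t \<or> t = 0" using r t by auto
    then show ?thesis using t r_def by auto
  qed
  define f where "f x = (1 + r * x) * Lam mu (1 + x) + (1 - r * x) * Lam mu (1 - x) - r * x\<^sup>2" for x
  define f1 where "f1 x = r * Lam mu (1 + x) + (1 + r * x) * (1 + x) powr (mu - 2)
      - r * Lam mu (1 - x) - (1 - r * x) * (1 - x) powr (mu - 2) - 2 * r * x" for x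
  define f2 where "f2 x = 2 * r * (1 + x) powr (mu - 2) + (mu - 2) * (1 + r * x) * (1 + x) powr (mu - 3)
      + 2 * r * (1 - x) powr (mu - 2) + (mu - 2) * (1 - r * x) * (1 - x) powr (mu - 3) - 2 * r" for x
  have df: "(f has_real_derivative f1 z) (at z)" if z: "0 \<le> z" "z < 1" for z
  proof -
    have dA: "((\<lambda>x. 1 + r * x) has_real_derivative r) (at z)" by (auto intro!: derivative_eq_intros)
    have dB: "((\<lambda>x. 1 - r * x) has_real_derivative - r) (at z)" by (auto intro!: derivative_eq_intros)
    have dC: "((\<lambda>x. r * x\<^sup>2) has_real_derivative 2 * r * z) (at z)" by (auto intro!: derivative_eq_intros)
    have "(f has_real_derivative (r * Lam mu (1 + z) + (1 + z) powr (mu - 2) * (1 + r * z))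
            + (- r * Lam mu (1 - z) + - ((1 - z) powr (mu - 2)) * (1 - r * z)) - 2 * r * z) (at z)"
      unfolding f_def
      by (intro DERIV_diff DERIV_add DERIV_mult dA dB dC dL_plus dL_minus) (use z in auto)
    then show ?thesis by (simp add: f1_def algebra_simps)
  qed
  have df1: "(f1 has_real_derivative f2 z) (at z)" if z: "0 \<le> z" "z < 1" for z
  proof -
    have dA: "((\<lambda>x. 1 + r * x) has_real_derivative r) (at z)" by (auto intro!: derivative_eq_intros)
    have dB: "((\<lambda>x. 1 - r * x) has_real_derivative - r) (at z)" by (auto intro!: derivative_eq_intros)
    have dC: "((\<lambda>x. 2 * r * x) has_real_derivative 2 * r) (at z)" by (auto intro!: derivative_eq_intros)
    have "(f1 has_real_derivative
        r * (1 + z) powr (mu - 2) + (r * (1 + z) powr (mu - 2) + (mu - 2) * (1 + z) powr (mu - 2 - 1) * (1 + r * z))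
        - r * - ((1 - z) powr (mu - 2)) - (- r * (1 - z) powr (mu - 2) + - ((mu - 2) * (1 - z) powr (mu - 2 - 1)) * (1 - r * z))
        - 2 * r) (at z)"
      unfolding f1_def
      by (intro DERIV_diff DERIV_add DERIV_mult DERIV_cmult dA dB dC dL_plus dL_minus dP_plus dP_minus) (use z in auto)
    moreover have "mu - 2 - 1 = mu - 3" by simp
    ultimately show ?thesis by (simp add: f2_def algebra_simps)
  qed
  have f2pos: "0 \<le> f2 z" if z: "0 \<le> z" "z < 1" for z
  proof -
    define A where "A = (1 + z) powr (mu - 3)"
    define B where "B = (1 - z) powr (mu - 3)"
    have eA: "(1 + z) powr (mu - 2) = A * (1 + z)" using z powr_pred_mult[of "1 + z" "mu - 2"]
      by (simp add: A_def)
    have eB: "(1 - z) powr (mu - 2) = B * (1 - z)" using z powr_pred_mult[of "1 - z" "mu - 2"]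
      by (simp add: B_def)
    have h1: "2 \<le> A * (1 + z) + B * (1 - z)"
      using two_le_powr_sum[of z r] z r eA eB by (simp add: r_def)
    have h2: "2 \<le> A + B"
      using two_le_powr_sum[of z "r + 1"] z r by (simp add: r_def A_def B_def algebra_simps)
    have "f2 z = r * ((r - 1) * (A + B) + (2 - r) * (A * (1 + z) + B * (1 - z)) - 2)"
      unfolding f2_def eA eB by (simp add: A_def B_def r_def algebra_simps)
    moreover have "(r - 1) * (A + B) \<ge> (r - 1) * 2" using h2 r by (intro mult_left_mono) auto
    moreover have "(2 - r) * (A * (1 + z) + B * (1 - z)) \<ge> (2 - r) * 2" using h1 r by (intro mult_left_mono) auto
    ultimately show ?thesis using r by simp
  qed
  have f1pos: "0 \<le> f1 x" if "0 \<le> x" "x \<le> t" for x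
  proof -
    have "f1 0 \<le> f1 x"
      by (rule DERIV_nonneg_imp_nondecreasing[OF that(1)])
         (use df1 f2pos that t1 in \<open>force\<close>)
    then show ?thesis by (simp add: f1_def)
  qed
  have "f 0 \<le> f t"
    by (rule DERIV_nonneg_imp_nondecreasing[OF t(1)])
       (use df f1pos t1 in \<open>force\<close>)
  then show ?thesis by (simp add: f_def r_def)
qed

lemma regime1:
  fixes Wa Wb u v D mu :: real
  assumes mu: "0 \<le> mu" "mu < 1"
    and uv: "0 < u" "u \<le> v" "u + v \<le> 1" and W: "0 \<le> Wb" "Wb < Wa"
    and hyp: "\<And>\<alpha> \<beta>. 0 < \<alpha> \<Longrightarrow> 0 < \<beta> \<Longrightarrow> \<alpha> + \<beta> = u + v \<Longrightarrow>
              Wa * (Lam mu \<alpha> - Lam mu u) + Wb * (Lam mu \<beta> - Lam mu v) \<le> D"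
  shows "(Wa - Wb)\<^sup>2 \<le> 2 powr mu * (2 - mu) * (Wa + Wb) * D"
proof -
  define r where "r = 2 - mu"
  define m where "m = Wa + Wb"
  define d where "d = Wa - Wb"
  define \<delta> where "\<delta> = d / m"
  define \<tau> where "\<tau> = \<delta> / r"
  define s where "s = (u + v) / 2"
  have r: "1 < r" "r \<le> 2" using mu by (auto simp: r_def)
  have m: "m > 0" "d > 0" using W by (auto simp: m_def d_def)
  have \<delta>: "0 < \<delta>" "\<delta> \<le> 1" using W m by (auto simp: \<delta>_def m_def d_def)
  have \<tau>: "0 < \<tau>" "r * \<tau> = \<delta>" "\<tau> < 1" using \<delta> r
    by (auto simp: \<tau>_def divide_less_eq)
  have s: "0 < s" "s \<le> 1/2" "u \<le> s" "s \<le> v" using uv by (auto simp: s_def)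
  have "Wa * (Lam mu (s * (1 + \<tau>)) - Lam mu u) + Wb * (Lam mu (s * (1 - \<tau>)) - Lam mu v) \<le> D"
  proof (rule hyp)
    show "0 < s * (1 + \<tau>)" "0 < s * (1 - \<tau>)" using s \<tau> by auto
    show "s * (1 + \<tau>) + s * (1 - \<tau>) = u + v" by (simp add: s_def field_simps)
  qed
  moreover have mid: "Lam mu v - Lam mu s \<le> Lam mu s - Lam mu u"
  proof -
    have e1: "s + (s - u) = v" "u + (s - u) = s" by (auto simp: s_def field_simps)
    show ?thesis using Lam_incr[of mu u s "s - u"] s mu uv unfolding e1 by simp
  qed
  moreover have "Lam mu s \<le> Lam mu v" using Lam_mono s by blast
  ultimately have "Wa * (Lam mu (s * (1 + \<tau>)) - Lam mu s) + Wb * (Lam mu (s * (1 - \<tau>)) - Lam mu s) \<le> D"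
  proof -
    assume h: "Wa * (Lam mu (s * (1 + \<tau>)) - Lam mu u) + Wb * (Lam mu (s * (1 - \<tau>)) - Lam mu v) \<le> D"
      and mid: "Lam mu v - Lam mu s \<le> Lam mu s - Lam mu u" and mo: "Lam mu s \<le> Lam mu v"
    have "Wb * (Lam mu v - Lam mu s) \<le> Wa * (Lam mu s - Lam mu u)"
      using mid mo W by (meson dual_order.trans less_eq_real_def mult_left_mono mult_right_mono diff_ge_0_iff_ge)
    then show ?thesis using h by (simp add: algebra_simps)
  qed
  then have g: "s powr (mu - 1) * (Wa * Lam mu (1 + \<tau>) + Wb * Lam mu (1 - \<tau>)) \<le> D"
    using Lam_scale[of s "1 + \<tau>" mu] Lam_scale[of s "1 - \<tau>" mu] s \<tau>
    by (simp add: algebra_simps)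
  have P: "r * \<tau>\<^sup>2 \<le> (1 + r * \<tau>) * Lam mu (1 + \<tau>) + (1 - r * \<tau>) * Lam mu (1 - \<tau>)"
    using pinsker_powr[of mu \<tau>] mu \<tau> \<delta> by (simp add: r_def)
  have eW: "Wa = m * (1 + \<delta>) / 2" "Wb = m * (1 - \<delta>) / 2" using m
    by (auto simp: \<delta>_def m_def d_def field_simps)
  have "Wa * Lam mu (1 + \<tau>) + Wb * Lam mu (1 - \<tau>)
        = m / 2 * ((1 + r * \<tau>) * Lam mu (1 + \<tau>) + (1 - r * \<tau>) * Lam mu (1 - \<tau>))"
    unfolding eW \<tau>(2) by (simp add: field_simps)
  also have "\<dots> \<ge> m / 2 * (r * \<tau>\<^sup>2)" using P m by (intro mult_left_mono) auto
  finally have br: "m / 2 * (r * \<tau>\<^sup>2) \<le> Wa * Lam mu (1 + \<tau>) + Wb * Lam mu (1 - \<tau>)" .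
  have sk: "2 powr (1 - mu) \<le> s powr (mu - 1)"
  proof -
    have "(1/2) powr (mu - 1) \<le> s powr (mu - 1)" by (rule powr_mono2') (use s mu in auto)
    moreover have "(1/2::real) powr (mu - 1) = 2 powr (1 - mu)"
      by (simp add: powr_divide powr_minus_divide[symmetric] powr_minus)
    ultimately show ?thesis by simp
  qed
  have brpos: "0 \<le> m / 2 * (r * \<tau>\<^sup>2)" using m r by simp
  have "2 powr (1 - mu) * (m / 2 * (r * \<tau>\<^sup>2)) \<le> s powr (mu - 1) * (Wa * Lam mu (1 + \<tau>) + Wb * Lam mu (1 - \<tau>))"
    by (rule mult_mono[OF sk br]) (use brpos in auto)
  with g have key: "2 powr (1 - mu) * (m / 2 * (r * \<tau>\<^sup>2)) \<le> D" by linarith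
  have "r * \<tau>\<^sup>2 = d\<^sup>2 / (m\<^sup>2 * r)" using r m
    by (simp add: \<tau>_def \<delta>_def power2_eq_square field_simps)
  then have "2 powr (1 - mu) * (m / 2 * (r * \<tau>\<^sup>2)) = 2 powr (1 - mu) / 2 * d\<^sup>2 / (m * r)"
    using m r by (simp add: power2_eq_square field_simps)
  also have "2 powr (1 - mu) / 2 = 1 / 2 powr mu"
    by (simp add: powr_diff)
  finally have "d\<^sup>2 / (2 powr mu * (m * r)) \<le> D" using key by simp
  then have "d\<^sup>2 \<le> D * (2 powr mu * (m * r))" using m r
    by (simp add: divide_le_eq mult_pos_pos)
  then show ?thesis by (simp add: d_def m_def r_def algebra_simps)
qed

lemma ln_7_4: "1/2 \<le> ln (7/4 :: real)"
proof -
  have "exp (1/2 :: real) * exp (1/2) = exp 1" by (simp flip: exp_add)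
  also have "\<dots> \<le> 3" by (rule exp_le)
  finally have "exp (1/2::real) * exp (1/2) \<le> (7/4) * (7/4)" by simp
  then have "exp (1/2::real) \<le> 7/4"
    by (metis less_eq_real_def mult_strict_mono not_le exp_gt_zero zero_le_divide_iff zero_le_numeral)
  then have "ln (exp (1/2::real)) \<le> ln (7/4)" by (subst ln_le_cancel_iff) auto
  then show ?thesis by simp
qed

lemma regime2:
  fixes Wa Wb u v D mu N :: real
  assumes mu: "1 \<le> mu" "mu < 2"
    and uv: "0 < u" "u \<le> v" and W: "0 \<le> Wb" "Wb < Wa" and N: "N > 0" "1 \<le> N * v"
    and hyp: "\<And>\<alpha> \<beta>. 0 < \<alpha> \<Longrightarrow> 0 < \<beta> \<Longrightarrow> \<alpha> + \<beta> = u + v \<Longrightarrow>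
              Wa * (Lam mu \<alpha> - Lam mu u) + Wb * (Lam mu \<beta> - Lam mu v) \<le> D"
  shows "(Wa - Wb)\<^sup>2 \<le> 2 * N powr (mu - 1) * (Wa + Wb) * D"
proof -
  define m where "m = Wa + Wb"
  define d where "d = Wa - Wb"
  have m: "m > 0" "d > 0" using W by (auto simp: m_def d_def)
  have v: "v > 0" using uv by simp
  have gain: "v powr (mu - 1) * (Wa * ln (1 + \<tau>) + Wb * ln (1 - \<tau>)) \<le> D"
    if \<tau>: "0 \<le> \<tau>" "\<tau> < 1" for \<tau>
  proof -
    have h: "Wa * (Lam mu (u + v * \<tau>) - Lam mu u) + Wb * (Lam mu (v * (1 - \<tau>)) - Lam mu v) \<le> D"
    proof (rule hyp)
      show "0 < u + v * \<tau>" using uv \<tau> v by (simp add: add_pos_nonneg)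
      show "0 < v * (1 - \<tau>)" using \<tau> v by simp
      show "u + v * \<tau> + v * (1 - \<tau>) = u + v" by (simp add: algebra_simps)
    qed
    have i1: "Lam mu (v + v * \<tau>) - Lam mu v \<le> Lam mu (u + v * \<tau>) - Lam mu u"
      by (rule Lam_incr) (use mu uv \<tau> v in auto)
    have i2: "Lam mu (v + v * \<tau>) - Lam mu v = v powr (mu - 1) * Lam mu (1 + \<tau>)"
      using Lam_scale[of v "1 + \<tau>" mu] v \<tau> by (simp add: algebra_simps)
    have i3: "Lam mu (v * (1 - \<tau>)) - Lam mu v = v powr (mu - 1) * Lam mu (1 - \<tau>)"
      using Lam_scale[of v "1 - \<tau>" mu] v \<tau> by simp
    have l1: "ln (1 + \<tau>) \<le> Lam mu (1 + \<tau>)" using Lam_ge_ln mu \<tau> by simp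
    have l2: "ln (1 - \<tau>) \<le> Lam mu (1 - \<tau>)" using Lam_ge_ln mu \<tau> by simp
    have vk: "0 < v powr (mu - 1)" using v by simp
    have "Wa * (v powr (mu - 1) * ln (1 + \<tau>)) \<le> Wa * (Lam mu (u + v * \<tau>) - Lam mu u)"
      using i1 i2 l1 vk W by (smt (verit) mult_left_mono)
    moreover have "Wb * (v powr (mu - 1) * ln (1 - \<tau>)) \<le> Wb * (Lam mu (v * (1 - \<tau>)) - Lam mu v)"
      using i3 l2 vk W by (smt (verit) mult_left_mono)
    ultimately show ?thesis using h by (simp add: algebra_simps)
  qed
  have key: "d\<^sup>2 / (2 * m) \<le> v powr (mu - 1) * (d\<^sup>2 / (2 * m)) * N powr (mu - 1)
             \<and> v powr (mu - 1) * (d\<^sup>2 / (2 * m)) \<le> D"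
  proof
    have "1 \<le> (N * v) powr (mu - 1)" using N mu by (intro ge_one_powr_ge_zero) auto
    then have "1 \<le> v powr (mu - 1) * N powr (mu - 1)" using N v by (simp add: powr_mult mult.commute)
    moreover have "0 \<le> d\<^sup>2 / (2 * m)" using m by simp
    ultimately show "d\<^sup>2 / (2 * m) \<le> v powr (mu - 1) * (d\<^sup>2 / (2 * m)) * N powr (mu - 1)"
      by (metis mult.assoc mult.commute mult_left_mono mult.right_neutral)
  next
    show "v powr (mu - 1) * (d\<^sup>2 / (2 * m)) \<le> D"
    proof (cases "Wb = 0")
      case True
      have "Wa * (1/2) \<le> Wa * ln (1 + 3/4)" using ln_7_4 W by (intro mult_left_mono) auto
      then have "d\<^sup>2 / (2 * m) \<le> Wa * ln (1 + 3/4) + Wb * ln (1 - 3/4)"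
        using True m by (simp add: d_def m_def power2_eq_square)
      then have "v powr (mu - 1) * (d\<^sup>2 / (2 * m)) \<le> v powr (mu - 1) * (Wa * ln (1 + 3/4) + Wb * ln (1 - 3/4))"
        using v by (intro mult_left_mono) auto
      then show ?thesis using gain[of "3/4"] by simp
    next
      case False
      define \<delta> where "\<delta> = d / m"
      have \<delta>: "0 \<le> \<delta>" "\<delta> < 1" using m W False by (auto simp: \<delta>_def d_def m_def divide_less_eq)
      have eW: "Wa = m * (1 + \<delta>) / 2" "Wb = m * (1 - \<delta>) / 2" using m
        by (auto simp: \<delta>_def m_def d_def field_simps)
      have "Wa * ln (1 + \<delta>) + Wb * ln (1 - \<delta>) = m / 2 * ((1 + \<delta>) * ln (1 + \<delta>) + (1 - \<delta>) * ln (1 - \<delta>))"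
        unfolding eW by (simp add: field_simps)
      also have "\<dots> \<ge> m / 2 * \<delta>\<^sup>2" using pinsker_ln[OF \<delta>] m by (intro mult_left_mono) auto
      also have "m / 2 * \<delta>\<^sup>2 = d\<^sup>2 / (2 * m)" using m by (simp add: \<delta>_def power2_eq_square field_simps)
      finally have "v powr (mu - 1) * (d\<^sup>2 / (2 * m)) \<le> v powr (mu - 1) * (Wa * ln (1 + \<delta>) + Wb * ln (1 - \<delta>))"
        using v by (intro mult_left_mono) auto
      then show ?thesis using gain[OF \<delta>] by simp
    qed
  qed
  then have "d\<^sup>2 / (2 * m) \<le> D * N powr (mu - 1)"
    by (smt (verit) mult_right_mono powr_ge_zero)
  then have "d\<^sup>2 \<le> D * N powr (mu - 1) * (2 * m)" using m by (simp add: divide_le_eq)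
  then show ?thesis by (simp add: d_def m_def algebra_simps)
qed

lemma regime3:
  fixes Wa Wb u v D mu N :: real
  assumes mu: "2 \<le> mu"
    and uv: "0 < u" "0 < v" and W: "0 \<le> Wb" "Wb \<le> Wa" and N: "N > 0" "1 \<le> N * v"
    and hyp: "\<And>\<alpha> \<beta>. 0 < \<alpha> \<Longrightarrow> 0 < \<beta> \<Longrightarrow> \<alpha> + \<beta> = u + v \<Longrightarrow>
              Wa * (Lam mu \<alpha> - Lam mu u) + Wb * (Lam mu \<beta> - Lam mu v) \<le> D"
  shows "Wa - Wb \<le> (mu - 1) * N powr (mu - 1) * D"
proof -
  define k where "k = mu - 1"
  have k: "k \<ge> 1" "mu \<noteq> 1" using mu by (auto simp: k_def)
  have LL: "Lam mu x = (x powr k - 1) / k" for x using k by (simp add: Lam_def k_def)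
  have bound: "(Wa * t powr k - Wb * v powr k) / k \<le> D" if t: "0 < t" "t < v" for t
  proof -
    have h: "Wa * (Lam mu (u + t) - Lam mu u) + Wb * (Lam mu (v - t) - Lam mu v) \<le> D"
      by (rule hyp) (use t uv in auto)
    have a: "t powr k \<le> (u + t) powr k - u powr k" using superadd_powr[of k u t] k uv t by simp
    have b: "- (v powr k) \<le> (v - t) powr k - v powr k" by simp
    have "Wa * t powr k \<le> Wa * ((u + t) powr k - u powr k)" using a W by (intro mult_left_mono) auto
    moreover have "Wb * (- (v powr k)) \<le> Wb * ((v - t) powr k - v powr k)" using b W by (intro mult_left_mono) auto
    ultimately have "Wa * t powr k - Wb * v powr k \<le> Wa * ((u + t) powr k - u powr k) + Wb * ((v - t) powr k - v powr k)"
      by simp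
    then have "(Wa * t powr k - Wb * v powr k) / k \<le> (Wa * ((u + t) powr k - u powr k) + Wb * ((v - t) powr k - v powr k)) / k"
      using k by (intro divide_right_mono) auto
    also have "\<dots> = Wa * (Lam mu (u + t) - Lam mu u) + Wb * (Lam mu (v - t) - Lam mu v)"
      unfolding LL using k by (simp add: field_simps)
    finally have "(Wa * t powr k - Wb * v powr k) / k \<le> Wa * (Lam mu (u + t) - Lam mu u) + Wb * (Lam mu (v - t) - Lam mu v)" .
    then show ?thesis using h by linarith
  qed
  have lim: "((\<lambda>t. (Wa * t powr k - Wb * v powr k) / k) \<longlongrightarrow> (Wa * v powr k - Wb * v powr k) / k) (at_left v)"
    using uv k by (intro tendsto_intros) auto
  have ev: "eventually (\<lambda>t. (Wa * t powr k - Wb * v powr k) / k \<le> D) (at_left v)"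
    using eventually_at_left_real[OF uv(2)] by eventually_elim (use bound in auto)
  have main: "(Wa * v powr k - Wb * v powr k) / k \<le> D"
    using tendsto_upperbound[OF lim ev] by simp
  have "1 \<le> (N * v) powr k" using N k by (intro ge_one_powr_ge_zero) auto
  then have nv: "1 \<le> N powr k * v powr k" using N uv by (simp add: powr_mult)
  have "Wa - Wb \<le> (Wa - Wb) * (N powr k * v powr k)" using nv W by (simp add: mult_le_cancel_left1)
  also have "\<dots> = k * N powr k * ((Wa * v powr k - Wb * v powr k) / k)" using k by (simp add: field_simps)
  also have "\<dots> \<le> k * N powr k * D" using main k by (intro mult_left_mono) auto
  finally show ?thesis by (simp add: k_def)
qed

lemma sum_upd2:
  fixes G :: "nat \<Rightarrow> real \<Rightarrow> real"
  assumes "finite A" "a \<in> A" "b \<in> A" "a \<noteq> b"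
  shows "(\<Sum>y\<in>A. G y ((q(a := \<alpha>, b := \<beta>)) y)) - (\<Sum>y\<in>A. G y (q y))
         = (G a \<alpha> - G a (q a)) + (G b \<beta> - G b (q b))"
proof -
  have "(\<Sum>y\<in>A. G y ((q(a := \<alpha>, b := \<beta>)) y)) - (\<Sum>y\<in>A. G y (q y))
      = (\<Sum>y\<in>A. G y ((q(a := \<alpha>, b := \<beta>)) y) - G y (q y))"
    by (simp add: sum_subtractf)
  also have "\<dots> = (\<Sum>y\<in>A. (if y = a then G a \<alpha> - G a (q a) else 0) + (if y = b then G b \<beta> - G b (q b) else 0))"
    by (rule sum.cong) (use assms in auto)
  also have "\<dots> = (G a \<alpha> - G a (q a)) + (G b \<beta> - G b (q b))"
    using assms by (simp add: sum.distrib)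
  finally show ?thesis .
qed

lemma Gamma_nonneg:
  assumes "0 \<le> D" "c < 1" "0 \<le> mu"
  shows "0 \<le> Gamma_mu n c mu D"
  using assms by (auto simp: Gamma_mu_def)

lemma core_q:
  fixes W q :: "nat \<Rightarrow> real" and n a b :: nat and mu D c :: real
  assumes n: "n \<ge> 1" and ab: "a \<in> {1..n+1}" "b \<in> {1..n+1}"
    and qpos: "\<And>y. y \<in> {1..n+1} \<Longrightarrow> 0 < q y"
    and qsum: "(\<Sum>y\<in>{1..n+1}. q y) = 1"
    and qmax: "\<And>y. y \<in> {1..n+1} \<Longrightarrow> q y \<le> q b"
    and Wpos: "\<And>y. y \<in> {1..n+1} \<Longrightarrow> 0 \<le> W y"
    and Wmax: "\<And>y. y \<in> {1..n+1} \<Longrightarrow> W y \<le> W a"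
    and WM: "(\<Sum>y\<in>{1..n+1}. W y) = 2 - c" and c: "c < 1"
    and mu: "0 \<le> mu"
    and hyp: "\<And>q'. (\<And>y. y \<in> {1..n+1} \<Longrightarrow> 0 < q' y) \<Longrightarrow> (\<Sum>y\<in>{1..n+1}. q' y) = 1 \<Longrightarrow>
                (\<Sum>y\<in>{1..n+1}. W y * Lam mu (q' y)) - (\<Sum>y\<in>{1..n+1}. W y * Lam mu (q y)) \<le> D"
  shows "W a - W b \<le> Gamma_mu n c mu D"
proof -
  let ?A = "{1..n+1}"
  have D0: "0 \<le> D" using hyp[of q] qpos qsum by simp
  show ?thesis
  proof (cases "W b < W a")
    case False
    then have "W a - W b \<le> 0" by simp
    then show ?thesis using Gamma_nonneg[OF D0 c mu, of n] by linarith
  next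
    case True
    have ab': "a \<noteq> b" using True by auto
    define u where "u = q a"
    define v where "v = q b"
    have uv: "0 < u" "u \<le> v" using qpos qmax ab by (auto simp: u_def v_def)
    have sub: "{a, b} \<subseteq> ?A" using ab by auto
    have "(\<Sum>y\<in>{a,b}. q y) \<le> (\<Sum>y\<in>?A. q y)"
      by (rule sum_mono2) (use sub qpos in \<open>auto intro: less_imp_le\<close>)
    then have uv1: "u + v \<le> 1" using ab' qsum by (simp add: u_def v_def)
    have "(\<Sum>y\<in>{a,b}. W y) \<le> (\<Sum>y\<in>?A. W y)"
      by (rule sum_mono2) (use sub Wpos in auto)
    then have mM: "W a + W b \<le> 2 - c" using ab' WM by simp
    have "(\<Sum>y\<in>?A. q y) \<le> (\<Sum>y\<in>?A. v)" by (rule sum_mono) (use qmax in \<open>auto simp: v_def\<close>)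
    then have Nv: "1 \<le> real (n + 1) * v" using qsum by simp
    have Wb0: "0 \<le> W b" using Wpos ab by auto
    have two: "W a * (Lam mu \<alpha> - Lam mu u) + W b * (Lam mu \<beta> - Lam mu v) \<le> D"
      if "0 < \<alpha>" "0 < \<beta>" "\<alpha> + \<beta> = u + v" for \<alpha> \<beta>
    proof -
      define q' where "q' = q(a := \<alpha>, b := \<beta>)"
      have p': "0 < q' y" if "y \<in> ?A" for y using qpos that \<open>0 < \<alpha>\<close> \<open>0 < \<beta>\<close> by (auto simp: q'_def)
      have "(\<Sum>y\<in>?A. q' y) - (\<Sum>y\<in>?A. q y) = (\<alpha> - q a) + (\<beta> - q b)"
        using sum_upd2[of ?A a b "\<lambda>y x. x" q \<alpha> \<beta>] ab ab' by (simp add: q'_def)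
      then have s': "(\<Sum>y\<in>?A. q' y) = 1" using qsum that by (simp add: u_def v_def)
      have "(\<Sum>y\<in>?A. W y * Lam mu (q' y)) - (\<Sum>y\<in>?A. W y * Lam mu (q y))
            = (W a * Lam mu \<alpha> - W a * Lam mu (q a)) + (W b * Lam mu \<beta> - W b * Lam mu (q b))"
        using sum_upd2[of ?A a b "\<lambda>y x. W y * Lam mu x" q \<alpha> \<beta>] ab ab' by (simp add: q'_def)
      then show ?thesis using hyp[OF p' s'] by (simp add: u_def v_def algebra_simps)
    qed
    show ?thesis
    proof (cases "mu < 1")
      case True
      have "(W a - W b)\<^sup>2 \<le> 2 powr mu * (2 - mu) * (W a + W b) * D"
        by (rule regime1[OF mu True uv uv1 Wb0 \<open>W b < W a\<close> two])
      also have "\<dots> \<le> 2 powr mu * (2 - mu) * (2 - c) * D"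
        using mM D0 True by (intro mult_right_mono mult_left_mono) auto
      finally have "W a - W b \<le> sqrt ((2 - c) * 2 powr mu * (2 - mu) * D)"
        by (intro real_le_rsqrt) (simp add: algebra_simps)
      then show ?thesis using True by (simp add: Gamma_mu_def)
    next
      case F1: False
      show ?thesis
      proof (cases "mu < 2")
        case True
        have N: "0 < real (n + 1)" by simp
        have "(W a - W b)\<^sup>2 \<le> 2 * real (n + 1) powr (mu - 1) * (W a + W b) * D"
          by (rule regime2[OF _ True uv(1,2) Wb0 \<open>W b < W a\<close> N Nv two]) (use F1 in auto)
        also have "\<dots> \<le> 2 * real (n + 1) powr (mu - 1) * (2 - c) * D"
          using mM D0 by (intro mult_right_mono mult_left_mono) auto
        finally have "W a - W b \<le> sqrt (2 * (2 - c) * (real n + 1) powr (mu - 1) * D)"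
          by (intro real_le_rsqrt) (simp add: algebra_simps)
        then show ?thesis using True F1 by (simp add: Gamma_mu_def)
      next
        case False
        have N: "0 < real (n + 1)" by simp
        have "W a - W b \<le> (mu - 1) * real (n + 1) powr (mu - 1) * D"
        proof -
          have m2: "2 \<le> mu" using False by simp
          have v0: "0 < v" using uv by simp
          have wab: "W b \<le> W a" using \<open>W b < W a\<close> by simp
          show ?thesis by (rule regime3[OF m2 uv(1) v0 Wb0 wab N Nv two])
        qed
        then show ?thesis using False F1 by (simp add: Gamma_mu_def add.commute)
      qed
    qed
  qed
qed

lemma realize:
  assumes sym: "symmetric_hyp n H" and compl: "complete_hyp n H"
  shows "\<exists>g\<in>H. \<forall>y\<in>{1..n+1}. g x y = s y"
proof -
  obtain F where F: "\<forall>x. {(\<lambda>y\<in>{1..n+1}. h x y) | h. h \<in> H} = {(\<lambda>y\<in>{1..n+1}. f y x) | f. \<forall>y\<in>{1..n+1}. f y \<in> F}"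
    using sym unfolding symmetric_hyp_def by blast
  have Fx: "{(\<lambda>y\<in>{1..n+1}. h x y) | h. h \<in> H} = {(\<lambda>y\<in>{1..n+1}. f y x) | f. \<forall>y\<in>{1..n+1}. f y \<in> F}"
    using F by (rule spec)
  have cov: "\<exists>\<phi>. \<phi> \<in> F \<and> \<phi> x = t" for t
  proof -
    have c1: "\<forall>x. \<forall>y\<in>{1..n+1}. {h x y |h. h \<in> H} = UNIV"
      using compl unfolding complete_hyp_def .
    have one: "(1::nat) \<in> {1..n+1}" by simp
    have "{h x 1 |h. h \<in> H} = UNIV" using c1 one by blast
    then have "t \<in> {h x 1 | h. h \<in> H}" by (simp only: UNIV_I)
    then obtain h where h: "h \<in> H" "h x 1 = t" by blast
    have "(\<lambda>y\<in>{1..n+1}. h x y) \<in> {(\<lambda>y\<in>{1..n+1}. h x y) | h. h \<in> H}"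
      by (rule CollectI, rule exI[of _ h]) (simp add: h(1))
    then have "(\<lambda>y\<in>{1..n+1}. h x y) \<in> {(\<lambda>y\<in>{1..n+1}. f y x) | f. \<forall>y\<in>{1..n+1}. f y \<in> F}"
      unfolding Fx .
    then obtain f where f: "(\<lambda>y\<in>{1..n+1}. h x y) = (\<lambda>y\<in>{1..n+1}. f y x)" "\<forall>y\<in>{1..n+1}. f y \<in> F"
      by blast
    have "h x 1 = f 1 x" using fun_cong[OF f(1), of 1] by simp
    moreover have "f 1 \<in> F" using f(2) one by blast
    ultimately show ?thesis using h(2) by (intro exI[of _ "f 1"]) simp
  qed
  define f where "f y = (SOME \<phi>. \<phi> \<in> F \<and> \<phi> x = s y)" for y
  have f: "f y \<in> F \<and> f y x = s y" for y
    unfolding f_def by (rule someI_ex[OF cov])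
  have "(\<lambda>y\<in>{1..n+1}. f y x) \<in> {(\<lambda>y\<in>{1..n+1}. f y x) | f. \<forall>y\<in>{1..n+1}. f y \<in> F}"
    by (rule CollectI, rule exI[of _ f]) (simp add: f)
  then have "(\<lambda>y\<in>{1..n+1}. f y x) \<in> {(\<lambda>y\<in>{1..n+1}. h x y) | h. h \<in> H}"
    unfolding Fx .
  then obtain g where g: "(\<lambda>y\<in>{1..n+1}. f y x) = (\<lambda>y\<in>{1..n+1}. g x y)" "g \<in> H" by blast
  have "g x y = s y" if "y \<in> {1..n+1}" for y
    using fun_cong[OF g(1), of y] that f[of y] by simp
  then show ?thesis using g(2) by blast
qed

lemma ell_local:
  assumes "\<forall>y\<in>{1..n+1}. g x y = s y" "y \<in> {1..n+1}"
  shows "ell n mu g x y = ell n mu (\<lambda>_. s) x y"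
proof -
  have "(\<Sum>y'\<in>{1..n+1}. exp (g x y' - g x y)) = (\<Sum>y'\<in>{1..n+1}. exp (s y' - s y))"
    by (rule sum.cong) (use assms in auto)
  then show ?thesis unfolding ell_def by (simp only:)
qed

lemma pred_local:
  assumes "\<forall>y\<in>{1..n+1}. g x y = s y"
  shows "pred_label n tb g x = pred_label n tb (\<lambda>_. s) x"
proof -
  have i: "(\<lambda>y. g x y) ` {1..n} = s ` {1..n}" by (rule image_cong) (use assms in auto)
  have st: "{y \<in> {1..n}. g x y = Max (s ` {1..n})} = {y \<in> {1..n}. s y = Max (s ` {1..n})}"
    using assms by auto
  have gn: "g x (n + 1) = s (n + 1)" using assms by auto
  show ?thesis unfolding pred_label_def i st gn by (rule refl)
qed

lemma cond_local:
  assumes "\<forall>y\<in>{1..n+1}. g x y = s y"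
  shows "cond_loss n p (L_mu n c mu) g x = cond_loss n p (L_mu n c mu) (\<lambda>_. s) x"
    and "cond_loss n p (L_abs n tb c) g x = cond_loss n p (L_abs n tb c) (\<lambda>_. s) x"
proof -
  show "cond_loss n p (L_mu n c mu) g x = cond_loss n p (L_mu n c mu) (\<lambda>_. s) x"
    unfolding cond_loss_def L_mu_def
  proof (rule sum.cong)
    fix y assume y: "y \<in> {1..n}"
    have e1: "ell n mu g x y = ell n mu (\<lambda>_. s) x y"
      by (rule ell_local[of n g x s y mu]) (use assms y in auto)
    have e2: "ell n mu g x (n + 1) = ell n mu (\<lambda>_. s) x (n + 1)"
      by (rule ell_local[of n g x s "n + 1" mu]) (use assms y in auto)
    show "p x y * (ell n mu g x y + (1 - c) * ell n mu g x (n + 1)) =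
          p x y * (ell n mu (\<lambda>_. s) x y + (1 - c) * ell n mu (\<lambda>_. s) x (n + 1))"
      unfolding e1 e2 ..
  qed simp
  show "cond_loss n p (L_abs n tb c) g x = cond_loss n p (L_abs n tb c) (\<lambda>_. s) x"
    unfolding cond_loss_def L_abs_def pred_local[of n g x s tb, OF assms] ..
qed



lemma ell_Lam:
  assumes "y \<in> {1..n+1}"
  shows "ell n mu (\<lambda>_. s) x y = - Lam mu (exp (s y) / (\<Sum>y'\<in>{1..n+1}. exp (s y')))"
proof -
  define Z where "Z = (\<Sum>y'\<in>{1..n+1}. exp (s y'))"
  have Z: "Z > 0" unfolding Z_def by (rule sum_pos) auto
  have S: "(\<Sum>y'\<in>{1..n+1}. exp (s y' - s y)) = Z / exp (s y)"
    unfolding Z_def sum_divide_distrib by (rule sum.cong) (auto simp: exp_diff)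
  define e where "e = exp (s y)"
  have e: "e > 0" by (simp add: e_def)
  have L: "ell n mu (\<lambda>_. s) x y = (if mu = 1 then ln (Z / e) else ((Z / e) powr (1 - mu) - 1) / (1 - mu))"
    unfolding ell_def Let_def S e_def by (rule refl)
  have R: "exp (s y) / (\<Sum>y'\<in>{1..n+1}. exp (s y')) = e / Z" by (simp only: e_def Z_def)
  show ?thesis
  proof (cases "mu = 1")
    case True
    have "ln (Z / e) = - ln (e / Z)" using Z e by (simp add: ln_div)
    then show ?thesis unfolding L R Lam_def using True by simp
  next
    case False
    have "(Z / e) powr (1 - mu) = (e / Z) powr (mu - 1)"
      using Z e by (simp add: powr_def ln_div algebra_simps)
    moreover have "(A - 1) / (1 - mu) = - ((A - 1) / (mu - 1))" for A
      by (simp add: divide_simps) (simp add: algebra_simps)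
    ultimately show ?thesis using False unfolding L R Lam_def by simp
  qed
qed

definition Wt :: "nat \<Rightarrow> ('x \<Rightarrow> nat \<Rightarrow> real) \<Rightarrow> real \<Rightarrow> 'x \<Rightarrow> nat \<Rightarrow> real" where
  "Wt n p c x y = (if y = n + 1 then 1 - c else p x y)"

lemma cond_mu_W:
  assumes psum: "(\<Sum>y\<in>{1..n}. p x y) = 1"
  shows "cond_loss n p (L_mu n c mu) g x = (\<Sum>y\<in>{1..n+1}. Wt n p c x y * ell n mu g x y)"
proof -
  have "cond_loss n p (L_mu n c mu) g x
      = (\<Sum>y\<in>{1..n}. p x y * ell n mu g x y) + (\<Sum>y\<in>{1..n}. p x y) * ((1 - c) * ell n mu g x (n + 1))"
    unfolding cond_loss_def L_mu_def by (simp add: distrib_left sum.distrib sum_distrib_right)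
  also have "\<dots> = (\<Sum>y\<in>{1..n}. Wt n p c x y * ell n mu g x y) + Wt n p c x (n+1) * ell n mu g x (n + 1)"
    using psum by (simp add: Wt_def)
  also have "\<dots> = (\<Sum>y\<in>{1..n+1}. Wt n p c x y * ell n mu g x y)"
  proof -
    have e: "{1..n+1} = insert (n+1) {1..n}" by auto
    show ?thesis unfolding e by (subst sum.insert) auto
  qed
  finally show ?thesis .
qed

lemma ell_nonneg: "0 \<le> ell n mu g x y" if "y \<in> {1..n+1}"
proof -
  define S where "S = (\<Sum>y'\<in>{1..n+1}. exp (g x y' - g x y))"
  have "exp (g x y - g x y) \<le> S" unfolding S_def
    by (rule member_le_sum) (use that in auto)
  then have S1: "1 \<le> S" by simp
  show ?thesis
  proof (cases "mu = 1")
    case True then show ?thesis using S1 unfolding ell_def Let_def S_def[symmetric] by simp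
  next
    case False
    show ?thesis
    proof (cases "mu < 1")
      case True
      have "1 \<le> S powr (1 - mu)" using S1 True by (intro ge_one_powr_ge_zero) auto
      then show ?thesis using True unfolding ell_def Let_def S_def[symmetric] by simp
    next
      case F2: False
      have "S powr (1 - mu) \<le> 1" using S1 F2 False
        by (metis diff_ge_0_iff_ge le_less not_less powr_le_one_le powr_mono2' powr_one_eq_one zero_less_one less_le_trans)
      then show ?thesis using F2 False unfolding ell_def Let_def S_def[symmetric]
        by (simp add: divide_nonpos_neg)
    qed
  qed
qed

lemma cond_mu_nonneg:
  assumes "\<And>y. y \<in> {1..n} \<Longrightarrow> 0 \<le> p x y" "c < 1"
  shows "0 \<le> cond_loss n p (L_mu n c mu) g x"
  unfolding cond_loss_def L_mu_def
proof (rule sum_nonneg)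
  fix y assume y: "y \<in> {1..n}"
  then have "0 \<le> ell n mu g x y" "0 \<le> ell n mu g x (n+1)" by (auto intro!: ell_nonneg)
  then show "0 \<le> p x y * (ell n mu g x y + (1 - c) * ell n mu g x (n + 1))"
    using assms y by (intro mult_nonneg_nonneg add_nonneg_nonneg) auto
qed

lemma pred_props:
  assumes n: "n \<ge> 1" and tb: "\<And>x S. S \<noteq> {} \<Longrightarrow> S \<subseteq> {1..n} \<Longrightarrow> tb x S \<in> S"
  shows "pred_label n tb g x \<in> {1..n+1}"
    and "\<And>y. y \<in> {1..n+1} \<Longrightarrow> g x y \<le> g x (pred_label n tb g x)"
    and "pred_label n tb g x \<noteq> n + 1 \<Longrightarrow> pred_label n tb g x \<in> {1..n}"
proof -
  define M where "M = Max ((\<lambda>y. g x y) ` {1..n})"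
  have fin: "finite ((\<lambda>y. g x y) ` {1..n})" "(\<lambda>y. g x y) ` {1..n} \<noteq> {}" using n by auto
  have Mge: "g x y \<le> M" if "y \<in> {1..n}" for y
    unfolding M_def by (rule Max_ge) (use fin that in auto)
  have "M \<in> (\<lambda>y. g x y) ` {1..n}" unfolding M_def by (rule Max_in[OF fin])
  then obtain y0 where y0: "y0 \<in> {1..n}" "g x y0 = M" by auto
  define S where "S = {y \<in> {1..n}. g x y = M}"
  have S: "S \<noteq> {}" "S \<subseteq> {1..n}" using y0 by (auto simp: S_def)
  have P: "pred_label n tb g x = (if M \<le> g x (n + 1) then n + 1 else tb x S)"
    unfolding pred_label_def M_def S_def ..
  have "pred_label n tb g x \<in> {1..n+1} \<and> (\<forall>y\<in>{1..n+1}. g x y \<le> g x (pred_label n tb g x))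
        \<and> (pred_label n tb g x \<noteq> n + 1 \<longrightarrow> pred_label n tb g x \<in> {1..n})"
  proof (cases "M \<le> g x (n + 1)")
    case True
    have "g x y \<le> g x (n + 1)" if "y \<in> {1..n+1}" for y
    proof (cases "y = n + 1")
      case False then have "y \<in> {1..n}" using that by auto
      then show ?thesis using Mge True by (meson order_trans)
    qed simp
    then show ?thesis using P True by auto
  next
    case False
    have t: "tb x S \<in> S" using tb[OF S] .
    then have t1: "tb x S \<in> {1..n}" "g x (tb x S) = M" by (auto simp: S_def)
    have "g x y \<le> g x (tb x S)" if "y \<in> {1..n+1}" for y
    proof (cases "y = n + 1")
      case False then have "y \<in> {1..n}" using that by auto
      then show ?thesis using Mge t1 by simp
    next
      case True then show ?thesis using \<open>\<not> M \<le> g x (n + 1)\<close> t1 by simp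
    qed
    then show ?thesis using P False t1 by auto
  qed
  then show "pred_label n tb g x \<in> {1..n+1}"
    and "\<And>y. y \<in> {1..n+1} \<Longrightarrow> g x y \<le> g x (pred_label n tb g x)"
    and "pred_label n tb g x \<noteq> n + 1 \<Longrightarrow> pred_label n tb g x \<in> {1..n}" by auto
qed

lemma cond_abs_eq:
  assumes n: "n \<ge> 1" and tb: "\<And>x S. S \<noteq> {} \<Longrightarrow> S \<subseteq> {1..n} \<Longrightarrow> tb x S \<in> S"
    and psum: "(\<Sum>y\<in>{1..n}. p x y) = 1"
  shows "cond_loss n p (L_abs n tb c) g x = 1 - Wt n p c x (pred_label n tb g x)"
proof -
  define b where "b = pred_label n tb g x"
  show ?thesis
  proof (cases "b = n + 1")
    case True
    have "cond_loss n p (L_abs n tb c) g x = (\<Sum>y\<in>{1..n}. p x y * c)"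
      unfolding cond_loss_def L_abs_def b_def[symmetric] using True by (intro sum.cong) auto
    also have "\<dots> = c" using psum by (simp add: sum_distrib_right[symmetric])
    finally show ?thesis using True by (simp add: Wt_def b_def)
  next
    case False
    have b: "b \<in> {1..n}" using pred_props(3)[OF n tb, where g=g and x=x] False by (simp add: b_def)
    have "cond_loss n p (L_abs n tb c) g x = (\<Sum>y\<in>{1..n}. p x y - (if y = b then p x y else 0))"
      unfolding cond_loss_def L_abs_def b_def[symmetric] using False by (intro sum.cong) auto
    also have "\<dots> = 1 - p x b" using psum b by (simp add: sum_subtractf)
    finally show ?thesis using False by (simp add: Wt_def b_def)
  qed
qed

lemma pred_indicator:
  assumes n: "n \<ge> 1" and tb: "\<And>x S. S \<noteq> {} \<Longrightarrow> S \<subseteq> {1..n} \<Longrightarrow> tb x S \<in> S"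
    and a: "a \<in> {1..n+1}"
  shows "pred_label n tb (\<lambda>_ y. if y = a then 1 else 0) x = a"
proof -
  define s :: "nat \<Rightarrow> real" where "s y = (if y = a then 1 else 0)" for y
  have b: "pred_label n tb (\<lambda>_. s) x \<in> {1..n+1}" using pred_props(1)[OF n tb] .
  have m: "s y \<le> s (pred_label n tb (\<lambda>_. s) x)" if "y \<in> {1..n+1}" for y
    using pred_props(2)[OF n tb, of y "\<lambda>_. s" x] that by simp
  have "s (pred_label n tb (\<lambda>_. s) x) \<ge> 1" using m[OF a] by (simp add: s_def)
  then have "pred_label n tb (\<lambda>_. s) x = a" by (simp add: s_def split: if_splits)
  then show ?thesis by (simp add: s_def[abs_def])
qed

lemma Ai_eq:
  assumes n: "n \<ge> 1" and tb: "\<And>x S. S \<noteq> {} \<Longrightarrow> S \<subseteq> {1..n} \<Longrightarrow> tb x S \<in> S"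
    and psum: "(\<Sum>y\<in>{1..n}. p x y) = 1"
    and sym: "symmetric_hyp n H" and compl: "complete_hyp n H"
  shows "(INF g\<in>H. cond_loss n p (L_abs n tb c) g x) = 1 - Max (Wt n p c x ` {1..n+1})"
proof -
  let ?A = "{1..n+1}"
  have fin: "finite (Wt n p c x ` ?A)" "Wt n p c x ` ?A \<noteq> {}" by auto
  have "Max (Wt n p c x ` ?A) \<in> Wt n p c x ` ?A" by (rule Max_in[OF fin])
  then obtain a where a0: "Max (Wt n p c x ` ?A) = Wt n p c x a" "a \<in> ?A" by (rule imageE)
  then have a: "a \<in> ?A" "Wt n p c x a = Max (Wt n p c x ` ?A)" by simp_all
  define s :: "nat \<Rightarrow> real" where "s y = (if y = a then 1 else 0)" for y
  obtain g where g: "g \<in> H" "\<forall>y\<in>?A. g x y = s y" using realize[OF sym compl] by blast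
  have "cond_loss n p (L_abs n tb c) g x = cond_loss n p (L_abs n tb c) (\<lambda>_. s) x"
    by (rule cond_local(2)[where g=g and x=x and s=s and p=p and c=c and tb=tb, OF g(2)])
  also have "\<dots> = 1 - Wt n p c x a"
    using cond_abs_eq[where p=p and x=x and n=n and tb=tb and c=c, OF n tb psum] pred_indicator[OF n tb a(1), where x=x] by (simp add: s_def[abs_def])
  finally have ge: "cond_loss n p (L_abs n tb c) g x = 1 - Max (Wt n p c x ` ?A)" using a by simp
  have lb: "1 - Max (Wt n p c x ` ?A) \<le> cond_loss n p (L_abs n tb c) g' x" if "g' \<in> H" for g'
  proof -
    have "pred_label n tb g' x \<in> ?A" by (rule pred_props(1)[OF n tb])
    then have "Wt n p c x (pred_label n tb g' x) \<in> Wt n p c x ` ?A" by (rule imageI)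
    then have "Wt n p c x (pred_label n tb g' x) \<le> Max (Wt n p c x ` ?A)"
      by (rule Max_ge[OF fin(1)])
    moreover have "cond_loss n p (L_abs n tb c) g' x = 1 - Wt n p c x (pred_label n tb g' x)"
      by (rule cond_abs_eq[where p=p and x=x, OF n tb psum])
    ultimately show ?thesis by linarith
  qed
  show ?thesis
  proof (rule cInf_eq_minimum)
    show "1 - Max (Wt n p c x ` ?A) \<in> (\<lambda>g. cond_loss n p (L_abs n tb c) g x) ` H"
      by (rule rev_image_eqI[OF g(1)]) (use ge in simp)
    show "1 - Max (Wt n p c x ` ?A) \<le> z" if "z \<in> (\<lambda>g. cond_loss n p (L_abs n tb c) g x) ` H" for z
      using that lb by blast
  qed
qed



lemma cond_mu_Lam:
  assumes psum: "(\<Sum>y\<in>{1..n}. p x y) = 1"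
  shows "cond_loss n p (L_mu n c mu) (\<lambda>_. s) x
       = - (\<Sum>y\<in>{1..n+1}. Wt n p c x y * Lam mu (exp (s y) / (\<Sum>y'\<in>{1..n+1}. exp (s y'))))"
proof -
  have "cond_loss n p (L_mu n c mu) (\<lambda>_. s) x = (\<Sum>y\<in>{1..n+1}. Wt n p c x y * ell n mu (\<lambda>_. s) x y)"
    by (rule cond_mu_W[where p=p and x=x, OF psum])
  also have "\<dots> = (\<Sum>y\<in>{1..n+1}. - (Wt n p c x y * Lam mu (exp (s y) / (\<Sum>y'\<in>{1..n+1}. exp (s y')))))"
    by (rule sum.cong) (auto simp: ell_Lam)
  also have "\<dots> = - (\<Sum>y\<in>{1..n+1}. Wt n p c x y * Lam mu (exp (s y) / (\<Sum>y'\<in>{1..n+1}. exp (s y'))))"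
    by (simp add: sum_negf)
  finally show ?thesis .
qed

lemma pointwise:
  fixes n :: nat and c mu :: real and H :: "('x \<Rightarrow> nat \<Rightarrow> real) set" and h :: "'x \<Rightarrow> nat \<Rightarrow> real"
    and p :: "'x \<Rightarrow> nat \<Rightarrow> real" and tb :: "'x \<Rightarrow> nat set \<Rightarrow> nat" and x :: 'x
  assumes n: "n \<ge> 1" and c: "0 < c" "c < 1" and mu: "mu \<ge> 0"
    and tb: "\<And>x S. S \<noteq> {} \<Longrightarrow> S \<subseteq> {1..n} \<Longrightarrow> tb x S \<in> S"
    and sym: "symmetric_hyp n H" and compl: "complete_hyp n H"
    and p_nonneg: "\<And>y. y \<in> {1..n} \<Longrightarrow> p x y \<ge> 0"
    and psum: "(\<Sum>y\<in>{1..n}. p x y) = 1"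
    and hH: "h \<in> H"
  shows "cond_loss n p (L_abs n tb c) h x - (INF g\<in>H. cond_loss n p (L_abs n tb c) g x)
         \<le> Gamma_mu n c mu (cond_loss n p (L_mu n c mu) h x - (INF g\<in>H. cond_loss n p (L_mu n c mu) g x))"
proof -
  let ?A = "{1..n+1}"
  define W where "W = Wt n p c x"
  have fin: "finite (W ` ?A)" "W ` ?A \<noteq> {}" by auto
  have "Max (W ` ?A) \<in> W ` ?A" by (rule Max_in[OF fin])
  then obtain a where a0: "Max (W ` ?A) = W a" "a \<in> ?A" by (rule imageE)
  have Wmax: "W y \<le> W a" if "y \<in> ?A" for y
    using Max_ge[OF fin(1) imageI[OF that, of W]] a0 by simp
  define b where "b = pred_label n tb h x"
  have b: "b \<in> ?A" unfolding b_def by (rule pred_props(1)[OF n tb])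
  have hmax: "h x y \<le> h x b" if "y \<in> ?A" for y
    unfolding b_def by (rule pred_props(2)[OF n tb that])
  have LHS: "cond_loss n p (L_abs n tb c) h x - (INF g\<in>H. cond_loss n p (L_abs n tb c) g x) = W a - W b"
    using cond_abs_eq[where p=p and x=x and g=h and c=c, OF n tb psum] Ai_eq[where c=c and p=p and x=x, OF n tb psum sym compl] a0
    by (simp add: W_def b_def)
  define s where "s y = h x y" for y
  define Z where "Z = (\<Sum>y'\<in>?A. exp (s y'))"
  have Z: "Z > 0" unfolding Z_def by (rule sum_pos) auto
  define q where "q y = exp (s y) / Z" for y
  have qpos: "0 < q y" for y using Z by (simp add: q_def)
  have qsum: "(\<Sum>y\<in>?A. q y) = 1"
    using Z by (simp add: q_def Z_def sum_divide_distrib[symmetric])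
  have qmax: "q y \<le> q b" if "y \<in> ?A" for y
    using hmax[OF that] Z by (simp add: q_def s_def divide_right_mono)
  have Wpos: "0 \<le> W y" if "y \<in> ?A" for y
    using p_nonneg[of y] that c by (auto simp: W_def Wt_def)
  have WM: "(\<Sum>y\<in>?A. W y) = 2 - c"
  proof -
    have e: "?A = insert (n+1) {1..n}" by auto
    have "(\<Sum>y\<in>?A. W y) = W (n + 1) + (\<Sum>y\<in>{1..n}. W y)" unfolding e by (subst sum.insert) auto
    also have "(\<Sum>y\<in>{1..n}. W y) = (\<Sum>y\<in>{1..n}. p x y)" by (rule sum.cong) (auto simp: W_def Wt_def)
    finally show ?thesis using psum by (simp add: W_def Wt_def)
  qed
  define Bi where "Bi = (INF g\<in>H. cond_loss n p (L_mu n c mu) g x)"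
  have bdd: "bdd_below ((\<lambda>g. cond_loss n p (L_mu n c mu) g x) ` H)"
    by (rule bdd_belowI2[where m=0]) (rule cond_mu_nonneg[where p=p and x=x, OF p_nonneg c(2)])
  have hs: "\<forall>y\<in>?A. h x y = s y" by (simp add: s_def)
  have Ch: "cond_loss n p (L_mu n c mu) h x = - (\<Sum>y\<in>?A. W y * Lam mu (q y))"
    unfolding cond_local(1)[where g=h and x=x and s=s, OF hs] cond_mu_Lam[where p=p and x=x, OF psum]
    by (simp add: W_def q_def Z_def)
  have hyp: "(\<Sum>y\<in>?A. W y * Lam mu (q' y)) - (\<Sum>y\<in>?A. W y * Lam mu (q y))
             \<le> cond_loss n p (L_mu n c mu) h x - Bi"
    if q'pos: "\<And>y. y \<in> ?A \<Longrightarrow> 0 < q' y" and q'sum: "(\<Sum>y\<in>?A. q' y) = 1" for q'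
  proof -
    define s' where "s' y = ln (q' y)" for y
    obtain g' where g': "g' \<in> H" "\<forall>y\<in>?A. g' x y = s' y" using realize[OF sym compl] by blast
    have es: "exp (s' y) = q' y" if "y \<in> ?A" for y using q'pos[OF that] by (simp add: s'_def)
    have Z1: "(\<Sum>y'\<in>?A. exp (s' y')) = 1" using q'sum by (simp add: es)
    have "cond_loss n p (L_mu n c mu) g' x = - (\<Sum>y\<in>?A. W y * Lam mu (exp (s' y) / (\<Sum>y'\<in>?A. exp (s' y'))))"
      unfolding cond_local(1)[where g=g' and x=x and s=s', OF g'(2)] cond_mu_Lam[where p=p and x=x, OF psum]
      by (simp add: W_def)
    also have "\<dots> = - (\<Sum>y\<in>?A. W y * Lam mu (q' y))"
      unfolding Z1 by (simp add: es)
    finally have Cg: "cond_loss n p (L_mu n c mu) g' x = - (\<Sum>y\<in>?A. W y * Lam mu (q' y))" .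
    have "Bi \<le> cond_loss n p (L_mu n c mu) g' x"
      unfolding Bi_def by (rule cINF_lower[OF bdd g'(1)])
    then show ?thesis using Cg Ch by simp
  qed
  have "W a - W b \<le> Gamma_mu n c mu (cond_loss n p (L_mu n c mu) h x - Bi)"
    by (rule core_q[OF n a0(2) b _ qsum qmax Wpos Wmax WM c(2) mu hyp]) (use qpos in auto)
  then show ?thesis using LHS by (simp add: Bi_def)
qed

lemma ell_cont:
  fixes v :: "nat \<Rightarrow> nat \<Rightarrow> real"
  assumes conv: "\<And>y. y \<in> {1..n+1} \<Longrightarrow> (\<lambda>k. v k y) \<longlonglongrightarrow> s y" and y: "y \<in> {1..n+1}"
  shows "(\<lambda>k. ell n mu (\<lambda>_. v k) x y) \<longlonglongrightarrow> ell n mu (\<lambda>_. s) x y"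
proof -
  have e: "(\<lambda>k. exp (v k y' - v k y)) \<longlonglongrightarrow> exp (s y' - s y)" if "y' \<in> {1..n+1}" for y'
    by (rule tendsto_exp, rule tendsto_diff, rule conv[OF that], rule conv[OF y])
  have S: "(\<lambda>k. \<Sum>y'\<in>{1..n+1}. exp (v k y' - v k y)) \<longlonglongrightarrow> (\<Sum>y'\<in>{1..n+1}. exp (s y' - s y))"
    by (rule tendsto_sum, rule e)
  have Spos: "(\<Sum>y'\<in>{1..n+1}. exp (s y' - s y)) > 0" by (rule sum_pos) auto
  show ?thesis
  proof (cases "mu = 1")
    case True
    have "(\<lambda>k. ln (\<Sum>y'\<in>{1..n+1}. exp (v k y' - v k y))) \<longlonglongrightarrow> ln (\<Sum>y'\<in>{1..n+1}. exp (s y' - s y))"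
      by (rule tendsto_ln[OF S]) (use Spos in linarith)
    then show ?thesis unfolding ell_def Let_def if_P[OF True] .
  next
    case False
    have p: "(\<lambda>k. (\<Sum>y'\<in>{1..n+1}. exp (v k y' - v k y)) powr (1 - mu)) \<longlonglongrightarrow> (\<Sum>y'\<in>{1..n+1}. exp (s y' - s y)) powr (1 - mu)"
      by (rule tendsto_powr[OF S tendsto_const]) (use Spos in linarith)
    have "(\<lambda>k. ((\<Sum>y'\<in>{1..n+1}. exp (v k y' - v k y)) powr (1 - mu) - 1) / (1 - mu))
          \<longlonglongrightarrow> ((\<Sum>y'\<in>{1..n+1}. exp (s y' - s y)) powr (1 - mu) - 1) / (1 - mu)"
      by (rule tendsto_divide[OF tendsto_diff[OF p tendsto_const] tendsto_const]) (use False in simp)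
    then show ?thesis unfolding ell_def Let_def if_not_P[OF False] .
  qed
qed

lemma cond_mu_cont:
  fixes v :: "nat \<Rightarrow> nat \<Rightarrow> real"
  assumes conv: "\<And>y. y \<in> {1..n+1} \<Longrightarrow> (\<lambda>k. v k y) \<longlonglongrightarrow> s y"
  shows "(\<lambda>k. cond_loss n p (L_mu n c mu) (\<lambda>_. v k) x) \<longlonglongrightarrow> cond_loss n p (L_mu n c mu) (\<lambda>_. s) x"
  unfolding cond_loss_def L_mu_def
proof (rule tendsto_sum)
  fix y assume y: "y \<in> {1..n}"
  have y1: "y \<in> {1..n+1}" and y2: "n + 1 \<in> {1..n+1}" using y by auto
  show "(\<lambda>k. p x y * (ell n mu (\<lambda>_. v k) x y + (1 - c) * ell n mu (\<lambda>_. v k) x (n + 1)))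
        \<longlonglongrightarrow> p x y * (ell n mu (\<lambda>_. s) x y + (1 - c) * ell n mu (\<lambda>_. s) x (n + 1))"
    by (rule tendsto_mult[OF tendsto_const tendsto_add[OF ell_cont[OF conv y1] tendsto_mult[OF tendsto_const ell_cont[OF conv y2]]]])
qed

lemma floor_approx: "(\<lambda>k. real_of_int \<lfloor>a * real (Suc k)\<rfloor> / real (Suc k)) \<longlonglongrightarrow> a"
proof (rule tendsto_sandwich[where f="\<lambda>k. a - inverse (real (Suc k))" and h="\<lambda>k. a"])
  show "\<forall>\<^sub>F k in sequentially. a - inverse (real (Suc k)) \<le> real_of_int \<lfloor>a * real (Suc k)\<rfloor> / real (Suc k)"
  proof (rule always_eventually, rule allI)
    fix k
    have m: "real (Suc k) > 0" by simp
    have "a * real (Suc k) - 1 \<le> real_of_int \<lfloor>a * real (Suc k)\<rfloor>" by linarith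
    then have "(a * real (Suc k) - 1) / real (Suc k) \<le> real_of_int \<lfloor>a * real (Suc k)\<rfloor> / real (Suc k)"
      using m by (intro divide_right_mono) auto
    moreover have "(a * real (Suc k) - 1) / real (Suc k) = a - inverse (real (Suc k))"
      using m by (simp add: field_simps)
    ultimately show "a - inverse (real (Suc k)) \<le> real_of_int \<lfloor>a * real (Suc k)\<rfloor> / real (Suc k)" by simp
  qed
  show "\<forall>\<^sub>F k in sequentially. real_of_int \<lfloor>a * real (Suc k)\<rfloor> / real (Suc k) \<le> a"
  proof (rule always_eventually, rule allI)
    fix k
    have m: "real (Suc k) > 0" by simp
    have "real_of_int \<lfloor>a * real (Suc k)\<rfloor> \<le> a * real (Suc k)" by linarith
    then show "real_of_int \<lfloor>a * real (Suc k)\<rfloor> / real (Suc k) \<le> a"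
      using m by (simp add: divide_le_eq)
  qed
  show "(\<lambda>k. a - inverse (real (Suc k))) \<longlonglongrightarrow> a"
    using tendsto_diff[OF tendsto_const LIMSEQ_inverse_real_of_nat, of a] by simp
qed simp

definition ratvec :: "rat list \<Rightarrow> nat \<Rightarrow> real" where
  "ratvec r y = real_of_rat (r ! y)"

lemma rat_approx:
  fixes s :: "nat \<Rightarrow> real"
  shows "\<exists>r :: nat \<Rightarrow> rat list. \<forall>y\<in>{1..n+1}. (\<lambda>k. ratvec (r k) y) \<longlonglongrightarrow> s y"
proof -
  define r where "r k = map (\<lambda>y. (of_int \<lfloor>s y * real (Suc k)\<rfloor> / of_nat (Suc k) :: rat)) [0..<n+2]" for k
  have "(\<lambda>k. ratvec (r k) y) \<longlonglongrightarrow> s y" if "y \<in> {1..n+1}" for y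
  proof -
    have len: "y < length [0..<n+2]" using that by simp
    have nu: "[0..<n+2] ! y = y" using nth_upt[of 0 y "n+2"] len by simp
    have "r k ! y = of_int \<lfloor>s y * real (Suc k)\<rfloor> / of_nat (Suc k)" for k
      unfolding r_def nth_map[OF len] nu ..
    then have "ratvec (r k) y = real_of_int \<lfloor>s y * real (Suc k)\<rfloor> / real (Suc k)" for k
      by (simp only: ratvec_def of_rat_divide of_rat_of_int_eq of_rat_of_nat_eq)
    then show ?thesis using floor_approx[of "s y"] by simp
  qed
  then show ?thesis by blast
qed

lemma L_mu_const: "L_mu n c mu (\<lambda>_. v) x y = L_mu n c mu (\<lambda>_. v) x' y"
  by (simp add: L_mu_def ell_def)

lemma Bi_INF_rat:
  fixes n :: nat and c mu :: real and H :: "('x \<Rightarrow> nat \<Rightarrow> real) set"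
    and p :: "'x \<Rightarrow> nat \<Rightarrow> real" and x :: 'x
  assumes c: "c < 1"
    and sym: "symmetric_hyp n H" and compl: "complete_hyp n H"
    and p_nonneg: "\<And>y. y \<in> {1..n} \<Longrightarrow> p x y \<ge> 0"
    and Hne: "H \<noteq> {}"
  shows "(INF g\<in>H. cond_loss n p (L_mu n c mu) g x) = (INF r\<in>UNIV. cond_loss n p (L_mu n c mu) (\<lambda>_. ratvec r) x)"
proof (rule antisym)
  have bddH: "bdd_below ((\<lambda>g. cond_loss n p (L_mu n c mu) g x) ` H)"
    by (rule bdd_belowI2[where m=0]) (rule cond_mu_nonneg[where p=p and x=x, OF p_nonneg c])
  have bddR: "bdd_below ((\<lambda>r. cond_loss n p (L_mu n c mu) (\<lambda>_. ratvec r) x) ` UNIV)"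
    by (rule bdd_belowI2[where m=0]) (rule cond_mu_nonneg[where p=p and x=x, OF p_nonneg c])
  show "(INF g\<in>H. cond_loss n p (L_mu n c mu) g x) \<le> (INF r\<in>UNIV. cond_loss n p (L_mu n c mu) (\<lambda>_. ratvec r) x)"
  proof (rule cINF_greatest)
    fix r :: "rat list"
    obtain g where g: "g \<in> H" "\<forall>y\<in>{1..n+1}. g x y = ratvec r y" using realize[OF sym compl] by blast
    have "(INF g\<in>H. cond_loss n p (L_mu n c mu) g x) \<le> cond_loss n p (L_mu n c mu) g x"
      by (rule cINF_lower[OF bddH g(1)])
    also have "\<dots> = cond_loss n p (L_mu n c mu) (\<lambda>_. ratvec r) x"
      by (rule cond_local(1)[where g=g and x=x and s="ratvec r", OF g(2)])
    finally show "(INF g\<in>H. cond_loss n p (L_mu n c mu) g x) \<le> cond_loss n p (L_mu n c mu) (\<lambda>_. ratvec r) x" .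
  qed simp
  show "(INF r\<in>UNIV. cond_loss n p (L_mu n c mu) (\<lambda>_. ratvec r) x) \<le> (INF g\<in>H. cond_loss n p (L_mu n c mu) g x)"
  proof (rule cINF_greatest)
    fix g assume g: "g \<in> H"
    define s where "s y = g x y" for y
    obtain r where r: "\<forall>y\<in>{1..n+1}. (\<lambda>k. ratvec (r k) y) \<longlonglongrightarrow> s y" using rat_approx by blast
    have lim: "(\<lambda>k. cond_loss n p (L_mu n c mu) (\<lambda>_. ratvec (r k)) x) \<longlonglongrightarrow> cond_loss n p (L_mu n c mu) (\<lambda>_. s) x"
      by (rule cond_mu_cont[where v="\<lambda>k. ratvec (r k)"]) (use r in auto)
    have ev: "\<forall>\<^sub>F k in sequentially. (INF r\<in>UNIV. cond_loss n p (L_mu n c mu) (\<lambda>_. ratvec r) x) \<le> cond_loss n p (L_mu n c mu) (\<lambda>_. ratvec (r k)) x"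
      by (rule always_eventually, rule allI, rule cINF_lower[OF bddR]) simp
    have "(INF r\<in>UNIV. cond_loss n p (L_mu n c mu) (\<lambda>_. ratvec r) x) \<le> cond_loss n p (L_mu n c mu) (\<lambda>_. s) x"
      by (rule tendsto_lowerbound[OF lim ev]) simp
    also have "cond_loss n p (L_mu n c mu) (\<lambda>_. s) x = cond_loss n p (L_mu n c mu) g x"
      by (rule cond_local(1)[where g=g and x=x and s=s, symmetric]) (simp add: s_def)
    finally show "(INF r\<in>UNIV. cond_loss n p (L_mu n c mu) (\<lambda>_. ratvec r) x) \<le> cond_loss n p (L_mu n c mu) g x" .
  qed (rule Hne)
qed

lemma sqrt_tangent:
  fixes z l :: real
  assumes "0 \<le> z" "0 < l"
  shows "sqrt z \<le> z / (2 * l) + l / 2"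
proof -
  have "0 \<le> (sqrt z - l)\<^sup>2" by simp
  also have "(sqrt z - l)\<^sup>2 = z - 2 * l * sqrt z + l\<^sup>2"
    using assms by (simp add: power2_eq_square algebra_simps)
  finally have "2 * l * sqrt z \<le> z + l\<^sup>2" by simp
  then have "sqrt z \<le> (z + l\<^sup>2) / (2 * l)" using assms by (simp add: le_divide_eq mult.commute)
  also have "(z + l\<^sup>2) / (2 * l) = z / (2 * l) + l / 2" using assms
    by (simp add: power2_eq_square field_simps)
  finally show ?thesis .
qed

lemma (in prob_space) jensen_sqrt:
  fixes f :: "'a \<Rightarrow> real" and K :: real
  assumes K: "0 \<le> K" and f: "integrable M f" and f0: "\<And>x. 0 \<le> f x"
  shows "integrable M (\<lambda>x. sqrt (K * f x))" "(\<integral>x. sqrt (K * f x) \<partial>M) \<le> sqrt (K * (\<integral>x. f x \<partial>M))"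
proof -
  have fm[measurable]: "f \<in> borel_measurable M" using f by auto
  have b: "integrable M (\<lambda>x. (K / 2) * f x + 1 / 2)"
    using f by (intro Bochner_Integration.integrable_add integrable_mult_right) auto
  show int: "integrable M (\<lambda>x. sqrt (K * f x))"
  proof (rule Bochner_Integration.integrable_bound[OF b])
    show "(\<lambda>x. sqrt (K * f x)) \<in> borel_measurable M" by measurable
    show "AE x in M. norm (sqrt (K * f x)) \<le> norm (K / 2 * f x + 1 / 2)"
    proof (rule AE_I2)
      fix x
      have Kf: "0 \<le> K * f x" using K f0 by simp
      have "sqrt (K * f x) \<le> K * f x / (2 * 1) + 1 / 2" by (rule sqrt_tangent[OF Kf]) simp
      then show "norm (sqrt (K * f x)) \<le> norm (K / 2 * f x + 1 / 2)" using Kf by simp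
    qed
  qed
  define T where "T = (\<integral>x. f x \<partial>M)"
  have T0: "0 \<le> T" unfolding T_def using f0 by simp
  have bound: "(\<integral>x. sqrt (K * f x) \<partial>M) \<le> K * T / (2 * l) + l / 2" if l: "0 < l" for l
  proof -
    have b2: "integrable M (\<lambda>x. (K / (2 * l)) * f x + l / 2)"
      using f by (intro Bochner_Integration.integrable_add integrable_mult_right) auto
    have "(\<integral>x. sqrt (K * f x) \<partial>M) \<le> (\<integral>x. (K / (2 * l)) * f x + l / 2 \<partial>M)"
    proof (rule integral_mono[OF int b2])
      fix x
      have Kf: "0 \<le> K * f x" using K f0 by simp
      show "sqrt (K * f x) \<le> K / (2 * l) * f x + l / 2"
        using sqrt_tangent[OF Kf l] by simp
    qed
    also have "\<dots> = (K / (2 * l)) * T + l / 2"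
      using f prob_space by (simp add: T_def Bochner_Integration.integral_add)
    finally show ?thesis by simp
  qed
  show "(\<integral>x. sqrt (K * f x) \<partial>M) \<le> sqrt (K * (\<integral>x. f x \<partial>M))"
  proof (cases "K * T > 0")
    case True
    have s: "0 < sqrt (K * T)" using True by simp
    have "(\<integral>x. sqrt (K * f x) \<partial>M) \<le> K * T / (2 * sqrt (K * T)) + sqrt (K * T) / 2"
      by (rule bound[OF s])
    also have "K * T / (2 * sqrt (K * T)) = sqrt (K * T) / 2"
    proof -
      have "sqrt (K * T) * sqrt (K * T) = K * T" using True by simp
      then show ?thesis using s by (metis (no_types, lifting) nonzero_mult_div_cancel_right
            less_irrefl mult.commute times_divide_eq_left divide_divide_eq_left)
    qed
    finally show ?thesis by (simp add: T_def)
  next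
    case False
    moreover have "0 \<le> K * T" using K T0 by simp
    ultimately have KT: "K * T = 0" by linarith
    define I where "I = (\<integral>x. sqrt (K * f x) \<partial>M)"
    have "I \<le> 0"
    proof (rule ccontr)
      assume "\<not> I \<le> 0"
      then have "0 < I" by simp
      from bound[OF this] KT have "I \<le> I / 2" by (simp add: I_def)
      with \<open>0 < I\<close> show False by simp
    qed
    moreover have "sqrt (K * (\<integral>x. f x \<partial>M)) = 0" using KT unfolding T_def by (simp only: real_sqrt_zero)
    ultimately show ?thesis unfolding I_def by linarith
  qed
qed

lemma (in prob_space) jensen_gamma:
  fixes f :: "'a \<Rightarrow> real"
  assumes f: "integrable M f" and f0: "\<And>x. 0 \<le> f x" and c: "c < 1" and mu: "0 \<le> mu"
  shows "integrable M (\<lambda>x. Gamma_mu n c mu (f x))"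
    "(\<integral>x. Gamma_mu n c mu (f x) \<partial>M) \<le> Gamma_mu n c mu (\<integral>x. f x \<partial>M)"
proof -
  have "integrable M (\<lambda>x. Gamma_mu n c mu (f x)) \<and>
        (\<integral>x. Gamma_mu n c mu (f x) \<partial>M) \<le> Gamma_mu n c mu (\<integral>x. f x \<partial>M)"
  proof (cases "mu < 1")
    case True
    define K where "K = (2 - c) * 2 powr mu * (2 - mu)"
    have K: "0 \<le> K" using True c by (simp add: K_def)
    have e: "Gamma_mu n c mu t = sqrt (K * t)" for t using True by (simp add: Gamma_mu_def K_def mult.assoc)
    show ?thesis unfolding e using jensen_sqrt[OF K f f0] by simp
  next
    case F1: False
    show ?thesis
    proof (cases "mu < 2")
      case True
      define K where "K = 2 * (2 - c) * (real n + 1) powr (mu - 1)"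
      have K: "0 \<le> K" using True c by (simp add: K_def)
      have e: "Gamma_mu n c mu t = sqrt (K * t)" for t using True F1 by (simp add: Gamma_mu_def K_def mult.assoc)
      show ?thesis unfolding e using jensen_sqrt[OF K f f0] by simp
    next
      case False
      define K where "K = (mu - 1) * (real n + 1) powr (mu - 1)"
      have e: "Gamma_mu n c mu t = K * t" for t using False F1 by (simp add: Gamma_mu_def K_def)
      show ?thesis unfolding e using f by simp
    qed
  qed
  then show "integrable M (\<lambda>x. Gamma_mu n c mu (f x))"
    "(\<integral>x. Gamma_mu n c mu (f x) \<partial>M) \<le> Gamma_mu n c mu (\<integral>x. f x \<partial>M)" by auto
qed

theorem theorem1:
  fixes n :: nat and c \<mu> :: real
    and H :: "('x \<Rightarrow> nat \<Rightarrow> real) set" and h :: "'x \<Rightarrow> nat \<Rightarrow> real"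
    and Mx :: "'x measure" and p :: "'x \<Rightarrow> nat \<Rightarrow> real"
    and tb :: "'x \<Rightarrow> nat set \<Rightarrow> nat"
  assumes n2: "n \<ge> 2"
    and c: "0 < c" "c < 1"
    and mu: "\<mu> \<ge> 0"
    and tb: "\<And>x S. S \<noteq> {} \<Longrightarrow> S \<subseteq> {1..n} \<Longrightarrow> tb x S \<in> S"
    and sym: "symmetric_hyp n H"
    and compl: "complete_hyp n H"
    and meas_H: "\<And>g y. g \<in> H \<Longrightarrow> (\<lambda>x. g x y) \<in> borel_measurable Mx"
    and D: "prob_space Mx"
    and meas_p: "\<And>y. (\<lambda>x. p x y) \<in> borel_measurable Mx"
    and p_nonneg: "\<And>x y. y \<in> {1..n} \<Longrightarrow> p x y \<ge> 0"
    and p_sum: "\<And>x. (\<Sum>y\<in>{1..n}. p x y) = 1"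
    and hH: "h \<in> H"
    and fin: "exp_loss n Mx p (L_mu n c \<mu>) h \<noteq> \<infinity>"
  shows "exp_loss n Mx p (L_abs n tb c) h - best_loss n Mx p (L_abs n tb c) H
           + min_gap n Mx p (L_abs n tb c) H
         \<le> ereal (Gamma_mu n c \<mu> (real_of_ereal
              (exp_loss n Mx p (L_mu n c \<mu>) h - best_loss n Mx p (L_mu n c \<mu>) H
                 + min_gap n Mx p (L_mu n c \<mu>) H)))"
proof -
  interpret P: prob_space Mx by (rule D)
  have n1: "n \<ge> 1" using n2 by simp
  define cA where "cA g x = cond_loss n p (L_abs n tb c) g x" for g x
  define cB where "cB g x = cond_loss n p (L_mu n c \<mu>) g x" for g x
  define Ai where "Ai x = (INF g\<in>H. cA g x)" for x
  define Bi where "Bi x = (INF g\<in>H. cB g x)" for x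
  define Dl where "Dl x = cB h x - Bi x" for x
  define G where "G = Gamma_mu n c \<mu>"
  have Hne: "H \<noteq> {}" using hH by auto
  have Wt01: "0 \<le> Wt n p c x y \<and> Wt n p c x y \<le> 1" if "y \<in> {1..n+1}" for x y
  proof (cases "y = n + 1")
    case True then show ?thesis using c by (simp add: Wt_def)
  next
    case False
    then have y: "y \<in> {1..n}" using that by auto
    have "p x y \<le> (\<Sum>y\<in>{1..n}. p x y)"
      by (rule member_le_sum) (use y p_nonneg in auto)
    then show ?thesis using p_nonneg[OF y] p_sum[of x] False by (simp add: Wt_def)
  qed
  have cA01: "0 \<le> cA g x \<and> cA g x \<le> 1" for g x
    using cond_abs_eq[where p=p and x=x and g=g and c=c, OF n1 tb p_sum] Wt01[OF pred_props(1)[OF n1 tb, where g=g and x=x]]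
    by (simp add: cA_def)
  have Ai_eq': "Ai x = 1 - Max ((\<lambda>y. Wt n p c x y) ` {1..n+1})" for x
    unfolding Ai_def cA_def using Ai_eq[where c=c and p=p and x=x, OF n1 tb p_sum sym compl] by simp
  have WtM: "(\<lambda>x. Wt n p c x y) \<in> borel_measurable Mx" for y
    by (cases "y = n + 1") (simp_all add: Wt_def meas_p)
  have Ai_meas: "Ai \<in> borel_measurable Mx"
  proof -
    have "(\<lambda>x. Max ((\<lambda>y. Wt n p c x y) ` {1..n+1})) \<in> borel_measurable Mx"
      by (rule borel_measurable_Max) (auto intro: WtM)
    then show ?thesis unfolding Ai_eq'[abs_def] by measurable
  qed
  have Ai01: "0 \<le> Ai x \<and> Ai x \<le> 1" for x
  proof -
    have fin': "finite ((\<lambda>y. Wt n p c x y) ` {1..n+1})" "(\<lambda>y. Wt n p c x y) ` {1..n+1} \<noteq> {}" by auto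
    have "Max ((\<lambda>y. Wt n p c x y) ` {1..n+1}) \<in> (\<lambda>y. Wt n p c x y) ` {1..n+1}" by (rule Max_in[OF fin'])
    then obtain y where y: "Max ((\<lambda>y. Wt n p c x y) ` {1..n+1}) = Wt n p c x y" "y \<in> {1..n+1}"
      by (rule imageE)
    show ?thesis unfolding Ai_eq' y(1) using Wt01[OF y(2), of x] by linarith
  qed
  have hM[measurable]: "(\<lambda>x. h x y) \<in> borel_measurable Mx" for y using meas_H[OF hH] .
  have pM[measurable]: "(\<lambda>x. p x y) \<in> borel_measurable Mx" for y using meas_p .
  have cB_meas: "(\<lambda>x. cB h x) \<in> borel_measurable Mx"
  proof (cases "\<mu> = 1")
    case True
    show ?thesis unfolding cB_def cond_loss_def L_mu_def ell_def Let_def using True by simp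
  next
    case False
    show ?thesis unfolding cB_def cond_loss_def L_mu_def ell_def Let_def using False by simp
  qed
  have Bi_meas: "Bi \<in> borel_measurable Mx"
  proof -
    have e: "Bi x = (INF r\<in>UNIV. (\<Sum>y\<in>{1..n}. p x y * L_mu n c \<mu> (\<lambda>_. ratvec r) undefined y))" for x
    proof -
      have "Bi x = (INF r\<in>UNIV. cond_loss n p (L_mu n c \<mu>) (\<lambda>_. ratvec r) x)"
        unfolding Bi_def cB_def
        by (rule Bi_INF_rat[OF c(2) sym compl p_nonneg Hne])
      also have "\<dots> = (INF r\<in>UNIV. (\<Sum>y\<in>{1..n}. p x y * L_mu n c \<mu> (\<lambda>_. ratvec r) undefined y))"
        unfolding cond_loss_def by (subst L_mu_const[where x'=undefined]) (rule refl)
      finally show ?thesis .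
    qed
    have m: "(\<lambda>x. INF r\<in>UNIV. (\<Sum>y\<in>{1..n}. p x y * L_mu n c \<mu> (\<lambda>_. ratvec r) undefined y)) \<in> borel_measurable Mx"
      by (rule borel_measurable_cINF_real) auto
    have eq: "Bi = (\<lambda>x. INF r\<in>UNIV. (\<Sum>y\<in>{1..n}. p x y * L_mu n c \<mu> (\<lambda>_. ratvec r) undefined y))"
      by (rule ext) (rule e)
    show ?thesis by (rule ssubst[OF eq, where P="\<lambda>f. f \<in> borel_measurable Mx"]) (rule m)
  qed
  have Bi_bounds: "0 \<le> Bi x \<and> Bi x \<le> cB h x" for x
  proof -
    have bdd: "bdd_below ((\<lambda>g. cB g x) ` H)"
      unfolding cB_def by (rule bdd_belowI2[where m=0]) (rule cond_mu_nonneg[where p=p and x=x, OF p_nonneg c(2)])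
    have "Bi x \<le> cB h x" unfolding Bi_def by (rule cINF_lower[OF bdd hH])
    moreover have "0 \<le> Bi x" unfolding Bi_def cB_def
      by (rule cINF_greatest[OF Hne]) (rule cond_mu_nonneg[where p=p and x=x, OF p_nonneg c(2)])
    ultimately show ?thesis by simp
  qed
  have IB_fin: "(\<integral>\<^sup>+ x. ennreal (cB h x) \<partial>Mx) < \<infinity>"
    using fin unfolding exp_loss_def cB_def by (simp add: less_top)
  have cB_int: "integrable Mx (\<lambda>x. cB h x)"
    by (rule integrableI_nonneg[OF cB_meas _ IB_fin]) (use Bi_bounds in \<open>auto intro: order_trans\<close>)
  have Bi_int: "integrable Mx Bi"
  proof (rule Bochner_Integration.integrable_bound[OF cB_int Bi_meas], rule AE_I2)
    fix x
    have "Bi x \<le> cB h x" "0 \<le> Bi x" using Bi_bounds[of x] by auto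
    then show "norm (Bi x) \<le> norm (cB h x)" by simp
  qed
  have Dl_int: "integrable Mx Dl" unfolding Dl_def[abs_def] using cB_int Bi_int by simp
  have Dl0: "0 \<le> Dl x" for x using Bi_bounds[of x] by (simp add: Dl_def)
  have GD_int: "integrable Mx (\<lambda>x. G (Dl x))" unfolding G_def by (rule P.jensen_gamma(1)[OF Dl_int Dl0 c(2) mu])
  have jensen: "(\<integral>x. G (Dl x) \<partial>Mx) \<le> G (\<integral>x. Dl x \<partial>Mx)" unfolding G_def by (rule P.jensen_gamma(2)[OF Dl_int Dl0 c(2) mu])
  have Ai_int: "integrable Mx Ai"
  proof (rule Bochner_Integration.integrable_bound[OF _ Ai_meas, of "\<lambda>x. 1"], simp, rule AE_I2)
    fix x
    show "norm (Ai x) \<le> norm (1::real)" using Ai01[of x] by simp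
  qed
  have GD0: "0 \<le> G (Dl x)" for x unfolding G_def by (rule Gamma_nonneg[OF Dl0 c(2) mu])
  have pw: "cA h x \<le> Ai x + G (Dl x)" for x
  proof -
    have "cond_loss n p (L_abs n tb c) h x - (INF g\<in>H. cond_loss n p (L_abs n tb c) g x)
         \<le> Gamma_mu n c \<mu> (cond_loss n p (L_mu n c \<mu>) h x - (INF g\<in>H. cond_loss n p (L_mu n c \<mu>) g x))"
      by (rule pointwise[where x=x and p=p and tb=tb and H=H and h=h and c=c and n=n and mu=\<mu>,
            OF n1 c mu tb sym compl p_nonneg p_sum hH])
    then show ?thesis unfolding cA_def Ai_def Dl_def cB_def Bi_def G_def by linarith
  qed
  define IA where "IA = (\<integral>\<^sup>+ x. ennreal (cA h x) \<partial>Mx)"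
  have "IA \<le> (\<integral>\<^sup>+ x. ennreal (Ai x + G (Dl x)) \<partial>Mx)"
    unfolding IA_def by (rule nn_integral_mono) (use pw in \<open>simp add: ennreal_leI\<close>)
  also have "\<dots> = ennreal (\<integral>x. Ai x + G (Dl x) \<partial>Mx)"
    by (rule nn_integral_eq_integral) (use Ai_int GD_int Ai01 GD0 in \<open>auto intro: add_nonneg_nonneg\<close>)
  also have "(\<integral>x. Ai x + G (Dl x) \<partial>Mx) = (\<integral>x. Ai x \<partial>Mx) + (\<integral>x. G (Dl x) \<partial>Mx)"
    by (rule Bochner_Integration.integral_add[OF Ai_int GD_int])
  finally have IA_le: "IA \<le> ennreal ((\<integral>x. Ai x \<partial>Mx) + (\<integral>x. G (Dl x) \<partial>Mx))" .
  have IA_le1: "IA \<le> 1"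
  proof -
    have "IA \<le> (\<integral>\<^sup>+ x. ennreal 1 \<partial>Mx)"
      unfolding IA_def by (rule nn_integral_mono) (use cA01 in \<open>simp add: ennreal_leI\<close>)
    then show ?thesis by (simp add: P.emeasure_space_1)
  qed
  define a where "a = enn2real IA"
  have a0: "0 \<le> a" by (simp add: a_def)
  have IAa: "IA = ennreal a" using IA_le1 by (simp add: a_def ennreal_enn2real_if top_unique) (metis ennreal_enn2real ennreal_one_less_top le_less_trans less_top)
  have IAi: "(\<integral>\<^sup>+ x. ennreal (Ai x) \<partial>Mx) = ennreal (\<integral>x. Ai x \<partial>Mx)"
    by (rule nn_integral_eq_integral[OF Ai_int]) (use Ai01 in auto)
  have i0: "0 \<le> (\<integral>x. Ai x \<partial>Mx)" by (rule Bochner_Integration.integral_nonneg) (use Ai01 in blast)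
  have EA: "exp_loss n Mx p (L_abs n tb c) h = ereal a"
    unfolding exp_loss_def cA_def[symmetric] IA_def[symmetric] IAa using a0 by simp
  have bestA_bounds: "0 \<le> best_loss n Mx p (L_abs n tb c) H \<and> best_loss n Mx p (L_abs n tb c) H \<le> ereal a"
  proof
    show "0 \<le> best_loss n Mx p (L_abs n tb c) H"
      unfolding best_loss_def exp_loss_def by (rule INF_greatest) simp
    show "best_loss n Mx p (L_abs n tb c) H \<le> ereal a"
      unfolding best_loss_def EA[symmetric] by (rule INF_lower[OF hH])
  qed
  define bA where "bA = real_of_ereal (best_loss n Mx p (L_abs n tb c) H)"
  have bA: "best_loss n Mx p (L_abs n tb c) H = ereal bA"
    using bestA_bounds unfolding bA_def by (intro ereal_real'[symmetric]) auto
  have LHS: "exp_loss n Mx p (L_abs n tb c) h - best_loss n Mx p (L_abs n tb c) H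
           + min_gap n Mx p (L_abs n tb c) H = ereal (a - (\<integral>x. Ai x \<partial>Mx))"
    unfolding min_gap_def bA EA cA_def[symmetric] Ai_def[symmetric] IAi using i0 by simp
  have a_le: "a \<le> (\<integral>x. Ai x \<partial>Mx) + (\<integral>x. G (Dl x) \<partial>Mx)"
    using IA_le IAa by (simp add: ennreal_le_iff[symmetric] add_nonneg_nonneg i0 GD0)
  have IB: "(\<integral>\<^sup>+ x. ennreal (cB h x) \<partial>Mx) = ennreal (\<integral>x. cB h x \<partial>Mx)"
    by (rule nn_integral_eq_integral[OF cB_int]) (use Bi_bounds in \<open>auto intro: order_trans\<close>)
  have cB0: "0 \<le> cB h x" for x using Bi_bounds[of x] by linarith
  have eb0: "0 \<le> (\<integral>x. cB h x \<partial>Mx)" by (rule Bochner_Integration.integral_nonneg) (rule cB0)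
  have EB: "exp_loss n Mx p (L_mu n c \<mu>) h = ereal (\<integral>x. cB h x \<partial>Mx)"
    unfolding exp_loss_def cB_def[symmetric] IB using eb0 by simp
  have bestB_bounds: "0 \<le> best_loss n Mx p (L_mu n c \<mu>) H \<and> best_loss n Mx p (L_mu n c \<mu>) H \<le> ereal (\<integral>x. cB h x \<partial>Mx)"
  proof
    show "0 \<le> best_loss n Mx p (L_mu n c \<mu>) H"
      unfolding best_loss_def exp_loss_def by (rule INF_greatest) simp
    show "best_loss n Mx p (L_mu n c \<mu>) H \<le> ereal (\<integral>x. cB h x \<partial>Mx)"
      unfolding best_loss_def EB[symmetric] by (rule INF_lower[OF hH])
  qed
  define bB where "bB = real_of_ereal (best_loss n Mx p (L_mu n c \<mu>) H)"
  have bB: "best_loss n Mx p (L_mu n c \<mu>) H = ereal bB"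
    using bestB_bounds unfolding bB_def by (intro ereal_real'[symmetric]) auto
  have IBi: "(\<integral>\<^sup>+ x. ennreal (Bi x) \<partial>Mx) = ennreal (\<integral>x. Bi x \<partial>Mx)"
    by (rule nn_integral_eq_integral[OF Bi_int]) (use Bi_bounds in auto)
  have ib0: "0 \<le> (\<integral>x. Bi x \<partial>Mx)" by (rule Bochner_Integration.integral_nonneg) (use Bi_bounds in blast)
  have RHSarg: "exp_loss n Mx p (L_mu n c \<mu>) h - best_loss n Mx p (L_mu n c \<mu>) H
                 + min_gap n Mx p (L_mu n c \<mu>) H = ereal ((\<integral>x. cB h x \<partial>Mx) - (\<integral>x. Bi x \<partial>Mx))"
    unfolding min_gap_def bB EB cB_def[symmetric] Bi_def[symmetric] IBi using ib0 by simp
  have intD: "(\<integral>x. Dl x \<partial>Mx) = (\<integral>x. cB h x \<partial>Mx) - (\<integral>x. Bi x \<partial>Mx)"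
    unfolding Dl_def by (rule Bochner_Integration.integral_diff[OF cB_int Bi_int])
  have "a - (\<integral>x. Ai x \<partial>Mx) \<le> G ((\<integral>x. cB h x \<partial>Mx) - (\<integral>x. Bi x \<partial>Mx))"
    using a_le jensen intD by simp
  then show ?thesis unfolding LHS RHSarg G_def by simp
qed

end
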